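(* Let $\mathcal{A}\subset\mathcal{B}\subset\mathcal{N}=\{1,\dots,N\}$ and let $\gamma,\ell,\kappa$ satisfy $$\tfrac12<\gamma\le 1,\qquad \ell\in\Big(0,2\cos^{-1}\big(\tfrac1\gamma-1\big)\Big),\qquad \kappa>\kappa_*(\gamma,\ell,D(\Omega_\mathcal{B})):=\frac{D(\Omega_\mathcal{B})}{\gamma\sin\ell-2(1-\gamma)\sin\frac{\ell}{2}}.$$ Let $\Theta$ be a solution of the Kuramoto model such that $\Theta_\mathcal{A}$ is a $\gamma$-ensemble of arclength $\le\ell$ at time $0$; replace each $\theta_i$, $i\in\mathcal{A}$, by its $2\pi$-shift realizing $D(\Theta_\mathcal{A}(0))\le\ell$ (this is again a solution). Then: (1) $\sup_{t\ge0}D(\Theta_\mathcal{A}(t))\le\ell$ and $\limsup_{t\to\infty}D(\Theta_\mathcal{A}(t))\le\phi_1(\gamma,\kappa,D(\Omega_\mathcal{B}))$; (2) $\sup_{t\ge0}D(\Theta_\mathcal{B}(t))<\infty$; (3) if in addition $$\frac{D(\Omega_\mathcal{B})}{\kappa}<\frac{(2\gamma-1)^{3/2}}{\sqrt{2\gamma}}\cdot\frac{2-\gamma}{\sqrt{\gamma/2}+(1-\gamma)},$$ then for $i,j\in\mathcal{A}$: if $\nu_i>\nu_j$, $$\frac{\nu_i-\nu_j}{\kappa}\le\liminf_{t\to\infty}(\theta_i(t)-\theta_j(t))\le\limsup_{t\to\infty}(\theta_i(t)-\theta_j(t))\le\frac{\pi}{2\sqrt2\,(\gamma\cos\phi_1-(1-\gamma))}\cdot\frac{\nu_i-\nu_j}{\kappa},$$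 with $\phi_1=\phi_1(\gamma,\kappa,D(\Omega_\mathcal{B}))$; and if $\nu_i=\nu_j$, then $\lim_{t\to\infty}(\theta_i(t)-\theta_j(t))=0$.
   Context: Kuramoto model: for $N\ge2$, $\Omega=(\nu_1,\dots,\nu_N)\in\mathbb{R}^N$, $\kappa\ge0$, the phases $\Theta(t)=(\theta_1,\dots,\theta_N)\in\mathbb{R}^N$ satisfy $\dot\theta_i=\nu_i+\frac{\kappa}{N}\sum_{j=1}^N\sin(\theta_j-\theta_i)$. For $\mathcal{A}\subset\mathcal{N}=\{1,\dots,N\}$: $\Theta_\mathcal{A}=(\theta_i)_{i\in\mathcal{A}}$, $D(\Theta_\mathcal{A})=\max_{i,j\in\mathcal{A}}|\theta_i-\theta_j|$, $D(\Omega_\mathcal{A})=\max_{i,j\in\mathcal{A}}|\nu_i-\nu_j|$. For $\gamma\in(1/2,1]$: $\Theta_\mathcal{A}$ is a $\gamma$-ensemble if $|\mathcal{A}|/N\ge\gamma$; it is a $\gamma$-ensemble of arclength $\le\ell$ at time $t_0$ if moreover, after replacing some $\theta_i$ ($i\in\mathcal{A}$) by $\theta_i+2\pi m_i$ with $m_i\in\mathbb{Z}$, one has $D(\Theta_\mathcal{A}(t_0))\le\ell$. Let $f(\theta)=\gamma\sin\theta-2(1-\gamma)\sin\frac\theta2$. For $\kappa>0$ with $D(\Omega_\mathcal{B})/\kappa<\max_{[0,2\cos^{-1}((1-\gamma)/\gamma)]}f$, $\phi_1(\gamma,\kappa,D(\Omega_\mathcal{B}))$ denotes the smaller root of $f(\theta)=D(\Omega_\mathcal{B})/\kappa$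 in $[0,2\cos^{-1}\frac{1-\gamma}{\gamma})$. *)

theory Defs
  imports "HOL-Analysis.Analysis"
begin

definition kuramoto_solution ::
  "nat \<Rightarrow> (nat \<Rightarrow> real) \<Rightarrow> real \<Rightarrow> (nat \<Rightarrow> real \<Rightarrow> real) \<Rightarrow> bool" where
  "kuramoto_solution N \<nu> \<kappa> \<theta> \<longleftrightarrow>
     (\<forall>i\<in>{1..N}. \<forall>t\<ge>0.
        ((\<theta> i) has_real_derivative
           (\<nu> i + \<kappa> / real N * (\<Sum>j=1..N. sin (\<theta> j t - \<theta> i t)))) (at t within {0..}))"

definition diam_idx :: "(nat \<Rightarrow> real) \<Rightarrow> nat set \<Rightarrow> real" where
  "diam_idx x A = Max {\<bar>x i - x j\<bar> | i j. i \<in> A \<and> j \<in> A}"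

definition gamma_ensemble :: "nat \<Rightarrow> real \<Rightarrow> nat set \<Rightarrow> bool" where
  "gamma_ensemble N \<gamma> A \<longleftrightarrow> real (card A) / real N \<ge> \<gamma>"

definition f_gamma :: "real \<Rightarrow> real \<Rightarrow> real" where
  "f_gamma \<gamma> \<theta> = \<gamma> * sin \<theta> - 2 * (1 - \<gamma>) * sin (\<theta> / 2)"

definition phi1 :: "real \<Rightarrow> real \<Rightarrow> real \<Rightarrow> real" where
  "phi1 \<gamma> \<kappa> d = Inf {\<theta>. 0 \<le> \<theta> \<and> \<theta> < 2 * arccos ((1 - \<gamma>) / \<gamma>) \<and> f_gamma \<gamma> \<theta> = d / \<kappa>}"

end

theory Submission
  imports Defs "HOL-Analysis.Analysis"
begin


lemma sin_shift_int: "sin (x + 2 * pi * real_of_int n) = sin x"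
proof -
  have "sin (x + 2 * pi * real_of_int n) = sin x * cos (2 * pi * real_of_int n) + cos x * sin (2 * pi * real_of_int n)"
    by (rule sin_add)
  thus ?thesis by simp
qed

lemma sin_sum_ge:
  fixes a b :: real
  assumes "0 \<le> a" "0 \<le> b" "a + b \<le> pi"
  shows "sin (a + b) \<le> sin a + sin b"
proof -
  have "sin a \<ge> 0" "sin b \<ge> 0" using assms by (auto intro!: sin_ge_zero)
  moreover have "cos a \<le> 1" "cos b \<le> 1" by auto
  ultimately have "sin a * cos b \<le> sin a" "cos a * sin b \<le> sin b"
    using mult_left_le[of "cos b" "sin a"] mult_left_le[of "cos a" "sin b"] by (auto simp: mult.commute)
  thus ?thesis by (simp add: sin_add)
qed

lemma T1:
  fixes \<delta> D :: real
  assumes "0 \<le> \<delta>" "\<delta> \<le> D" "D \<le> pi"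
  shows "sin (\<delta> - D) - sin \<delta> \<le> - sin D"
proof -
  have "sin ((D - \<delta>) + \<delta>) \<le> sin (D - \<delta>) + sin \<delta>" using assms by (intro sin_sum_ge) auto
  moreover have "sin (\<delta> - D) = - sin (D - \<delta>)" by (metis minus_diff_eq sin_minus)
  ultimately show ?thesis by simp
qed

lemma T2:
  fixes y D :: real
  assumes "0 \<le> D" "D \<le> 2 * pi"
  shows "sin (y - D) - sin y \<le> 2 * sin (D / 2)"
proof -
  have s: "sin (D/2) \<ge> 0" using assms by (intro sin_ge_zero) auto
  have "sin (y - D) - sin y = 2 * sin ((y - D - y) / 2) * cos ((y - D + y) / 2)" by (rule sin_diff_sin)
  also have "\<dots> = - (2 * sin (D/2) * cos ((y - D + y) / 2))" by simp
  also have "\<dots> \<le> 2 * sin (D/2)"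
  proof -
    have "- cos ((y - D + y) / 2) \<le> 1" by (metis abs_le_D2 abs_cos_le_one)
    hence "sin (D/2) * (- cos ((y - D + y) / 2)) \<le> sin (D/2) * 1" using s by (intro mult_left_mono) auto
    thus ?thesis by simp
  qed
  finally show ?thesis .
qed

lemma core:
  fixes \<delta> :: "nat \<Rightarrow> real" and D \<gamma> :: real
  assumes A: "A \<subseteq> {1..N}" and D: "0 \<le> D" "D \<le> pi"
    and \<delta>: "\<And>k. k \<in> A \<Longrightarrow> 0 \<le> \<delta> k \<and> \<delta> k \<le> D"
    and card: "real (card A) \<ge> \<gamma> * real N"
  shows "(\<Sum>k=1..N. sin (\<delta> k - D) - sin (\<delta> k)) \<le> - real N * f_gamma \<gamma> D"
proof -
  have fin: "finite {1..N}" by simp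
  have split: "(\<Sum>k=1..N. sin (\<delta> k - D) - sin (\<delta> k)) =
     (\<Sum>k\<in>A. sin (\<delta> k - D) - sin (\<delta> k)) + (\<Sum>k\<in>{1..N}-A. sin (\<delta> k - D) - sin (\<delta> k))"
    by (subst sum.subset_diff[OF A fin]) (simp add: add.commute)
  have s1: "(\<Sum>k\<in>A. sin (\<delta> k - D) - sin (\<delta> k)) \<le> (\<Sum>k\<in>A. - sin D)"
    using \<delta> D by (intro sum_mono T1) auto
  have s2: "(\<Sum>k\<in>{1..N}-A. sin (\<delta> k - D) - sin (\<delta> k)) \<le> (\<Sum>k\<in>{1..N}-A. 2 * sin (D/2))"
    using D by (intro sum_mono T2) auto
  have cA: "card ({1..N} - A) = N - card A" using A by (simp add: card_Diff_subset finite_subset)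
  have cle: "card A \<le> N" using card_mono[OF fin A] by simp
  have sD: "sin D \<ge> 0" "sin (D/2) \<ge> 0" using D by (auto intro!: sin_ge_zero)
  have "(\<Sum>k=1..N. sin (\<delta> k - D) - sin (\<delta> k)) \<le> (\<Sum>k\<in>A. - sin D) + (\<Sum>k\<in>{1..N}-A. 2 * sin (D/2))"
    using split s1 s2 by linarith
  also have "\<dots> = - real (card A) * sin D + real (N - card A) * (2 * sin (D/2))"
    by (simp only: sum_constant cA)
  also have "\<dots> = - real (card A) * (sin D + 2 * sin (D/2)) + real N * (2 * sin (D/2))"
  proof -
    have "real (N - card A) = real N - real (card A)" using cle by (rule of_nat_diff)
    thus ?thesis by (simp add: distrib_left distrib_right left_diff_distrib)
  qed
  also have "\<dots> \<le> - (\<gamma> * real N) * (sin D + 2 * sin (D/2)) + real N * (2 * sin (D/2))"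
  proof -
    have X0: "0 \<le> sin D + 2 * sin (D/2)" using sD by simp
    have "\<gamma> * real N * (sin D + 2 * sin (D/2)) \<le> real (card A) * (sin D + 2 * sin (D/2))"
      by (rule mult_right_mono[OF card X0])
    hence "- real (card A) * (sin D + 2 * sin (D/2)) \<le> - (\<gamma> * real N) * (sin D + 2 * sin (D/2))"
      by simp
    thus ?thesis by (rule add_right_mono)
  qed
  also have "\<dots> = - real N * f_gamma \<gamma> D" unfolding f_gamma_def by (simp add: left_diff_distrib right_diff_distrib distrib_left distrib_right)
  finally show ?thesis .
qed

lemma cos_lip: "cos (x::real) - cos y \<le> \<bar>x - y\<bar>"
proof -
  have "cos x - cos y = 2 * sin ((x + y) / 2) * sin ((y - x) / 2)" by (rule cos_diff_cos)
  also have "\<dots> \<le> \<bar>2 * sin ((x + y) / 2) * sin ((y - x) / 2)\<bar>" by simp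
  also have "\<dots> \<le> 2 * 1 * \<bar>(y - x) / 2\<bar>"
    unfolding abs_mult by (intro mult_mono abs_sin_x_le_abs_x) auto
  finally show ?thesis by simp
qed

lemma jordan:
  fixes z :: real
  assumes "0 \<le> z" "z \<le> pi/4"
  shows "2 * sqrt 2 / pi * z \<le> sin z"
proof -
  have "concave_on {0..pi/4} sin"
    by (rule f''_le0_imp_concave[where f' = cos and f'' = "\<lambda>x. - sin x"])
       (auto intro!: derivative_eq_intros sin_ge_zero)
  from concave_onD_Icc'[OF this, of z] assms
  have "sin z \<ge> (sin (pi/4) - sin 0) / (pi/4 - 0) * (z - 0) + sin 0" by simp
  thus ?thesis by (simp add: sin_45 field_simps)
qed

lemma f_concave:
  fixes \<gamma> l :: real
  assumes \<gamma>: "1/2 < \<gamma>" "\<gamma> \<le> 1" and l: "0 < l" "l < 2 * arccos (1/\<gamma> - 1)"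
  shows "concave_on {0..l} (f_gamma \<gamma>)"
proof -
  define c where "c = 1/\<gamma> - 1"
  have c: "0 \<le> c" "c < 1" using \<gamma> by (auto simp: c_def field_simps)
  have ac: "arccos c \<le> pi/2" using c by (intro arccos_le_pi2) auto
  have cl: "cos (l/2) > c"
  proof -
    have "cos (arccos c) < cos (l/2)" using l ac by (intro cos_monotone_0_pi) (auto simp: c_def)
    thus ?thesis using c by simp
  qed
  show ?thesis
  proof (rule f''_le0_imp_concave[where f' = "\<lambda>x. \<gamma> * cos x - (1 - \<gamma>) * cos (x/2)"
        and f'' = "\<lambda>x. - \<gamma> * sin x + (1 - \<gamma>) / 2 * sin (x/2)"])
    fix x :: real
    show "(f_gamma \<gamma> has_real_derivative \<gamma> * cos x - (1 - \<gamma>) * cos (x/2)) (at x)"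
      unfolding f_gamma_def[abs_def] by (auto intro!: derivative_eq_intros)
    show "((\<lambda>x. \<gamma> * cos x - (1 - \<gamma>) * cos (x/2)) has_real_derivative - \<gamma> * sin x + (1 - \<gamma>) / 2 * sin (x/2)) (at x)"
      by (auto intro!: derivative_eq_intros)
  next
    fix x assume x: "x \<in> {0..l}"
    have sx: "sin (x/2) \<ge> 0" using x l ac by (intro sin_ge_zero) (auto simp: c_def)
    have "cos (x/2) \<ge> cos (l/2)" using x l ac by (intro cos_monotone_0_pi_le) (auto simp: c_def)
    hence "2 * \<gamma> * cos (x/2) \<ge> 2 * \<gamma> * c" using cl \<gamma> by (simp add: mult_left_mono)
    moreover have "2 * \<gamma> * c = 2 * (1 - \<gamma>)" using \<gamma> by (simp add: c_def field_simps)
    ultimately have "2 * (1 - \<gamma>) \<le> 2 * \<gamma> * cos (x/2)" by linarith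
    moreover have "(1 - \<gamma>)/2 \<le> 2 * (1 - \<gamma>)" using \<gamma> by simp
    ultimately have "(1 - \<gamma>)/2 \<le> 2 * \<gamma> * cos (x/2)" by (rule order.trans[rotated])
    hence "- 2 * \<gamma> * cos (x/2) + (1 - \<gamma>) / 2 \<le> 0" by simp
    hence "sin (x/2) * (- 2 * \<gamma> * cos (x/2) + (1 - \<gamma>) / 2) \<le> 0" by (rule mult_nonneg_nonpos[OF sx])
    moreover have "sin x = 2 * sin (x/2) * cos (x/2)" proof -
      have "sin (2 * (x / 2)) = 2 * sin (x / 2) * cos (x / 2)" by (rule sin_double)
      moreover have "2 * (x / 2) = x" by simp
      ultimately show ?thesis by simp
    qed
    ultimately show "- \<gamma> * sin x + (1 - \<gamma>) / 2 * sin (x/2) \<le> 0" by (simp add: algebra_simps)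
  qed (rule convex_real_interval)
qed


lemma f_half: "f_gamma \<gamma> \<theta> = 2 * sin (\<theta>/2) * (\<gamma> * cos (\<theta>/2) - (1 - \<gamma>))"
proof -
  have "sin \<theta> = 2 * sin (\<theta>/2) * cos (\<theta>/2)"
  proof -
    have "sin (2 * (\<theta> / 2)) = 2 * sin (\<theta> / 2) * cos (\<theta> / 2)" by (rule sin_double)
    moreover have "2 * (\<theta> / 2) = \<theta>" by simp
    ultimately show ?thesis by simp
  qed
  thus ?thesis unfolding f_gamma_def by (simp add: algebra_simps)
qed

lemma f_theta0:
  fixes \<gamma> :: real
  assumes \<gamma>: "1/2 < \<gamma>" "\<gamma> \<le> 1"
  shows "f_gamma \<gamma> (arccos (1/\<gamma> - 1)) = (2 * \<gamma> - 1) powr (3/2) / sqrt (2 * \<gamma>)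
                              * ((2 - \<gamma>) / (sqrt (\<gamma> / 2) + (1 - \<gamma>)))"
proof -
  define c where "c = 1/\<gamma> - 1"
  have c: "0 \<le> c" "c < 1" using \<gamma> by (auto simp: c_def field_simps)
  define \<theta> where "\<theta> = arccos c"
  have th: "0 \<le> \<theta>" "\<theta> \<le> pi/2" using c arccos_le_pi2[of c] arccos_lbound[of c] by (auto simp: \<theta>_def)
  have ct: "cos \<theta> = c" using c by (simp add: \<theta>_def)
  define q where "q = sqrt (2 * \<gamma>)"
  have q: "q > 0" "q^2 = 2 * \<gamma>" using \<gamma> by (auto simp: q_def)
  define s where "s = sqrt (2 * \<gamma> - 1)"
  have s: "s > 0" "s^2 = 2 * \<gamma> - 1" using \<gamma> by (auto simp: s_def)
  have co: "cos (\<theta>/2) = 1 / q"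
  proof -
    have "cos (2 * (\<theta>/2)) = 2 * cos (\<theta>/2) ^ 2 - 1" by (rule cos_double_cos)
    hence "cos (\<theta>/2) ^ 2 = (1 + c) / 2" using ct by simp
    also have "\<dots> = (1/q)^2" using q \<gamma> by (simp add: c_def power_divide field_simps)
    finally have "cos (\<theta>/2) ^ 2 = (1/q)^2" .
    moreover have "cos (\<theta>/2) \<ge> 0" using th by (intro cos_ge_zero) auto
    ultimately show ?thesis using q by (metis power2_eq_imp_eq less_eq_real_def zero_less_divide_1_iff)
  qed
  have si: "sin (\<theta>/2) = s / q"
  proof -
    have "sin (\<theta>/2) ^ 2 = 1 - cos (\<theta>/2) ^ 2" by (simp add: sin_squared_eq)
    also have "\<dots> = 1 - (1/q)^2" by (simp only: co)
    also have "\<dots> = (s/q)^2" using q s \<gamma> by (simp add: power_divide field_simps)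
    finally have "sin (\<theta>/2) ^ 2 = (s/q)^2" .
    moreover have "sin (\<theta>/2) \<ge> 0" using th by (intro sin_ge_zero) auto
    ultimately show ?thesis using q s by (metis power2_eq_imp_eq less_eq_real_def divide_pos_pos)
  qed
  have lhs: "f_gamma \<gamma> \<theta> = 2 * (s / q) * (\<gamma> / q - (1 - \<gamma>))" unfolding f_half co si by simp
  have p32: "(2 * \<gamma> - 1) powr (3/2) = (2 * \<gamma> - 1) * s"
  proof -
    have "(2 * \<gamma> - 1) powr (3/2) = (2 * \<gamma> - 1) powr (1 + 1/2)" by simp
    also have "\<dots> = (2 * \<gamma> - 1) powr 1 * (2 * \<gamma> - 1) powr (1/2)" by (rule powr_add)
    also have "\<dots> = (2 * \<gamma> - 1) * s" using \<gamma> by (simp add: powr_half_sqrt s_def)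
    finally show ?thesis .
  qed
  have sq2: "sqrt (\<gamma> / 2) = q / 2"
  proof -
    have "sqrt (\<gamma>/2) = sqrt (2 * \<gamma> / 4)" by simp
    also have "\<dots> = sqrt (2 * \<gamma>) / sqrt 4" by (rule real_sqrt_divide)
    finally show ?thesis by (simp add: q_def)
  qed
  have den: "q / 2 + (1 - \<gamma>) > 0" using q \<gamma> by simp
  have key: "(q - 2 * (1 - \<gamma>)) * (q / 2 + (1 - \<gamma>)) = (2 * \<gamma> - 1) * (2 - \<gamma>)"
    using q(2) by (simp add: algebra_simps power2_eq_square)
  have gq: "2 * \<gamma> / q = q" using q by (simp add: field_simps power2_eq_square)
  have "2 * (s / q) * (\<gamma> / q - (1 - \<gamma>)) = s / q * (2 * \<gamma> / q - 2 * (1 - \<gamma>))"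
    using q by (simp add: field_simps)
  also have "\<dots> = s / q * (q - 2 * (1 - \<gamma>))" by (simp only: gq)
  also have "\<dots> = s / q * ((2 * \<gamma> - 1) * (2 - \<gamma>) / (q / 2 + (1 - \<gamma>)))"
    using key den by (simp add: eq_divide_eq)
  also have "\<dots> = (2 * \<gamma> - 1) * s / q * ((2 - \<gamma>) / (q / 2 + (1 - \<gamma>)))" by simp
  finally show ?thesis using lhs p32 sq2 by (simp add: \<theta>_def c_def q_def)
qed


lemma barrier:
  fixes h h' :: "'p \<Rightarrow> real \<Rightarrow> real" and \<beta> \<beta>' :: "real \<Rightarrow> real"
  assumes fin: "finite P"
  and dh: "\<And>p t. p \<in> P \<Longrightarrow> t \<ge> T \<Longrightarrow> (h p has_real_derivative h' p t) (at t within {T..})"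
  and db: "\<And>t. t \<ge> T \<Longrightarrow> (\<beta> has_real_derivative \<beta>' t) (at t within {T..})"
  and cond: "\<And>p t. p \<in> P \<Longrightarrow> t \<ge> T \<Longrightarrow> h p t = \<beta> t \<Longrightarrow> (\<forall>q\<in>P. h q t \<le> \<beta> t) \<Longrightarrow> h' p t < \<beta>' t"
  and init: "\<And>q. q \<in> P \<Longrightarrow> h q T \<le> \<beta> T"
  and q: "q \<in> P" and t1: "t1 \<ge> T"
  shows "h q t1 \<le> \<beta> t1"
proof (rule ccontr)
  assume "\<not> h q t1 \<le> \<beta> t1"
  define g where "g p u = h p u - \<beta> u" for p u
  have gq: "g q t1 > 0" using \<open>\<not> h q t1 \<le> \<beta> t1\<close> by (simp add: g_def)
  have dg: "(g p has_real_derivative (h' p t - \<beta>' t)) (at t within {T..})" if "p \<in> P" "t \<ge> T" for p t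
    unfolding g_def[abs_def] using dh[OF that] db[OF that(2)] by (intro derivative_intros) auto
  have condg: "h' p t - \<beta>' t < 0" if "p \<in> P" "t \<ge> T" "g p t = 0" "\<forall>q\<in>P. g q t \<le> 0" for p t
    using cond[OF that(1,2)] that(3,4) by (auto simp: g_def)
  define S where "S = {s. T \<le> s \<and> s \<le> t1 \<and> (\<forall>u\<in>{T..s}. \<forall>p\<in>P. g p u \<le> 0)}"
  have TS: "T \<in> S" using init t1 by (auto simp: S_def g_def)
  have bdd: "bdd_above S" by (auto simp: S_def bdd_above_def)
  define s0 where "s0 = Sup S"
  have s0ge: "T \<le> s0" using TS bdd by (simp add: s0_def cSup_upper)
  have s0le: "s0 \<le> t1" unfolding s0_def using TS by (intro cSup_least) (auto simp: S_def)
  have below: "g p u \<le> 0" if "p \<in> P" "T \<le> u" "u < s0" for p u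
  proof -
    have "\<exists>s\<in>S. u < s" using \<open>u < s0\<close> TS bdd less_cSup_iff[of S u] unfolding s0_def by blast
    then obtain s where "s \<in> S" "u < s" by blast
    thus ?thesis using that by (auto simp: S_def)
  qed
  have at0: "g p s0 \<le> 0" if p: "p \<in> P" for p
  proof (cases "s0 = T")
    case True thus ?thesis using init p by (simp add: g_def)
  next
    case False
    hence lt: "T < s0" using s0ge by simp
    show ?thesis
    proof (rule ccontr)
      assume "\<not> g p s0 \<le> 0"
      have "continuous (at s0 within {T..}) (g p)" using dg[OF p s0ge] by (rule DERIV_continuous)
      then obtain d where d: "d > 0" "\<And>x'. x' \<in> {T..} \<Longrightarrow> dist x' s0 < d \<Longrightarrow> dist (g p x') (g p s0) < g p s0"
        unfolding continuous_within_eps_delta using \<open>\<not> g p s0 \<le> 0\<close> by (meson not_le)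
      define u where "u = max T (s0 - d/2)"
      have "T \<le> u" "u < s0" "dist u s0 < d" using lt d by (auto simp: u_def dist_real_def)
      hence "dist (g p u) (g p s0) < g p s0" using d by auto
      moreover have "g p u \<le> 0" using below[OF p \<open>T \<le> u\<close> \<open>u < s0\<close>] .
      ultimately show False by (auto simp: dist_real_def)
    qed
  qed
  have s0lt: "s0 < t1" using at0[OF q] gq s0le by (cases "s0 = t1") auto
  have "\<forall>p\<in>P. \<exists>d>0. \<forall>u. s0 < u \<and> u < s0 + d \<longrightarrow> g p u \<le> 0"
  proof
    fix p assume p: "p \<in> P"
    show "\<exists>d>0. \<forall>u. s0 < u \<and> u < s0 + d \<longrightarrow> g p u \<le> 0"
    proof (cases "g p s0 = 0")
      case True
      have "h' p s0 - \<beta>' s0 < 0" using condg[OF p s0ge True] at0 by auto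
      from has_real_derivative_neg_dec_right[OF dg[OF p s0ge] this]
      obtain d where d: "d > 0" "\<And>hh. hh > 0 \<Longrightarrow> s0 + hh \<in> {T..} \<Longrightarrow> hh < d \<Longrightarrow> g p s0 > g p (s0 + hh)" by blast
      show ?thesis
      proof (intro exI[of _ d] conjI allI impI)
        fix u assume u: "s0 < u \<and> u < s0 + d"
        have "g p s0 > g p (s0 + (u - s0))" using d(2)[of "u - s0"] u s0ge by auto
        thus "g p u \<le> 0" using True by simp
      qed (use d in auto)
    next
      case False
      hence neg: "g p s0 < 0" using at0[OF p] by simp
      have "continuous (at s0 within {T..}) (g p)" using dg[OF p s0ge] by (rule DERIV_continuous)
      then obtain d where d: "d > 0" "\<And>x'. x' \<in> {T..} \<Longrightarrow> dist x' s0 < d \<Longrightarrow> dist (g p x') (g p s0) < - g p s0"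
        unfolding continuous_within_eps_delta using neg by (meson neg_0_less_iff_less)
      show ?thesis
      proof (intro exI[of _ d] conjI allI impI)
        fix u assume u: "s0 < u \<and> u < s0 + d"
        hence "dist (g p u) (g p s0) < - g p s0" using d(2)[of u] s0ge by (auto simp: dist_real_def)
        thus "g p u \<le> 0" by (auto simp: dist_real_def)
      qed (use d in auto)
    qed
  qed
  then obtain df where df: "\<And>p. p \<in> P \<Longrightarrow> df p > 0 \<and> (\<forall>u. s0 < u \<and> u < s0 + df p \<longrightarrow> g p u \<le> 0)"
    using finite_set_choice[OF fin] by metis
  define d0 where "d0 = Min (insert (t1 - s0) (df ` P))"
  have d0pos: "d0 > 0" unfolding d0_def using fin s0lt df by (subst Min_gr_iff) auto
  have d0le: "d0 \<le> t1 - s0" "\<And>p. p \<in> P \<Longrightarrow> d0 \<le> df p" unfolding d0_def using fin by auto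
  define u0 where "u0 = s0 + d0/2"
  have "u0 \<in> S"
    unfolding S_def
  proof (intro CollectI conjI ballI)
    show "T \<le> u0" "u0 \<le> t1" using s0ge d0pos d0le by (auto simp: u0_def)
    fix u p assume u: "u \<in> {T..u0}" and p: "p \<in> P"
    show "g p u \<le> 0"
    proof (cases "u < s0")
      case True thus ?thesis using below[OF p] u by auto
    next
      case False
      show ?thesis
      proof (cases "u = s0")
        case True thus ?thesis using at0[OF p] by simp
      next
        case False
        hence "s0 < u" "u < s0 + df p" using \<open>\<not> u < s0\<close> u d0le(2)[OF p] d0pos by (auto simp: u0_def)
        thus ?thesis using df[OF p] by blast
      qed
    qed
  qed
  hence "u0 \<le> s0" unfolding s0_def using bdd by (rule cSup_upper)
  thus False using d0pos by (simp add: u0_def)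
qed


lemma eventual_bound:
  fixes h h' :: "'p \<Rightarrow> real \<Rightarrow> real"
  assumes fin: "finite P"
  and dh: "\<And>p t. p \<in> P \<Longrightarrow> t \<ge> T \<Longrightarrow> (h p has_real_derivative h' p t) (at t within {T..})"
  and aU: "a < U" and C: "C > 0"
  and cond: "\<And>p t. p \<in> P \<Longrightarrow> t \<ge> T \<Longrightarrow> (\<forall>q\<in>P. h q t \<le> h p t) \<Longrightarrow> a \<le> h p t \<Longrightarrow> h p t \<le> U \<Longrightarrow> h' p t \<le> - C"
  and init: "\<And>q. q \<in> P \<Longrightarrow> h q T \<le> U"
  shows "\<And>q t. q \<in> P \<Longrightarrow> t \<ge> T \<Longrightarrow> h q t \<le> a + (U - a) * exp (- (C / (2 * (U - a))) * (t - T))"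
proof -
  define c where "c = C / (2 * (U - a))"
  have c: "c > 0" using aU C by (simp add: c_def)
  define \<beta> where "\<beta> t = a + (U - a) * exp (- c * (t - T))" for t
  define \<beta>' where "\<beta>' t = (U - a) * (exp (- c * (t - T)) * (- c))" for t
  have db: "(\<beta> has_real_derivative \<beta>' t) (at t within {T..})" for t
    unfolding \<beta>_def[abs_def] \<beta>'_def by (auto intro!: derivative_eq_intros)
  fix q t assume q: "q \<in> P" and t: "t \<ge> T"
  have "h q t \<le> \<beta> t"
  proof (rule barrier[OF fin dh db _ _ q t])
    fix p s assume p: "p \<in> P" and s: "T \<le> s" and eq: "h p s = \<beta> s" and all: "\<forall>q\<in>P. h q s \<le> \<beta> s"
    have e1: "exp (- c * (s - T)) \<le> 1" using c s by simp
    have e0: "exp (- c * (s - T)) > 0" by simp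
    have m1: "(U - a) * exp (- c * (s - T)) \<le> U - a" using mult_left_le[OF e1, of "U - a"] aU by simp
    have m2: "0 \<le> (U - a) * exp (- c * (s - T))" using aU e0 by simp
    have "a \<le> h p s" "h p s \<le> U" using eq m1 m2 unfolding \<beta>_def by linarith+
    hence "h' p s \<le> - C" using cond[OF p s] all eq by auto
    moreover have "\<beta>' s \<ge> - C/2"
    proof -
      have "(U - a) * (exp (- c * (s - T)) * c) \<le> (U - a) * (1 * c)"
        using aU c e1 by (intro mult_left_mono mult_right_mono) auto
      moreover have "(U - a) * c = C/2" using aU unfolding c_def by (simp add: field_simps)
      moreover have "\<beta>' s = - ((U - a) * (exp (- c * (s - T)) * c))" by (simp add: \<beta>'_def)
      ultimately show ?thesis by simp
    qed
    ultimately show "h' p s < \<beta>' s" using C by linarith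
  next
    fix q assume "q \<in> P" thus "h q T \<le> \<beta> T" using init by (simp add: \<beta>_def)
  qed
  thus "h q t \<le> a + (U - a) * exp (- (C / (2 * (U - a))) * (t - T))" by (simp add: \<beta>_def c_def)
qed

lemma eventual_bound':
  fixes h h' :: "'p \<Rightarrow> real \<Rightarrow> real"
  assumes fin: "finite P"
  and dh: "\<And>p t. p \<in> P \<Longrightarrow> t \<ge> T \<Longrightarrow> (h p has_real_derivative h' p t) (at t within {T..})"
  and aU: "a < U" and C: "C > 0"
  and cond: "\<And>p t. p \<in> P \<Longrightarrow> t \<ge> T \<Longrightarrow> (\<forall>q\<in>P. h q t \<le> h p t) \<Longrightarrow> a \<le> h p t \<Longrightarrow> h p t \<le> U \<Longrightarrow> h' p t \<le> - C"
  and init: "\<And>q. q \<in> P \<Longrightarrow> h q T \<le> U"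
  and eta: "\<eta> > 0"
  shows "eventually (\<lambda>t. \<forall>q\<in>P. h q t \<le> a + \<eta>) at_top"
proof -
  define c where "c = C / (2 * (U - a))"
  have c: "c > 0" using aU C by (simp add: c_def)
  define r where "r = \<eta> / (U - a)"
  have r: "r > 0" using eta aU by (simp add: r_def)
  have "eventually (\<lambda>t. t > T - ln r / c) at_top" by (rule eventually_gt_at_top)
  hence "eventually (\<lambda>t. a + (U - a) * exp (- c * (t - T)) < a + \<eta>) at_top"
  proof eventually_elim
    case (elim t)
    hence "- c * (t - T) < ln r" using c by (simp add: field_simps)
    hence "exp (- c * (t - T)) < exp (ln r)" by (simp only: exp_less_cancel_iff)
    hence "exp (- c * (t - T)) < r" using r by simp
    hence "(U - a) * exp (- c * (t - T)) < (U - a) * r" using aU by simp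
    thus ?case using aU by (simp add: r_def)
  qed
  moreover have "eventually (\<lambda>t. t \<ge> T) at_top" by (rule eventually_ge_at_top)
  ultimately show ?thesis
  proof eventually_elim
    case (elim t)
    show ?case
    proof
      fix q assume q: "q \<in> P"
      have "h q t \<le> a + (U - a) * exp (- (C / (2 * (U - a))) * (t - T))"
        by (rule eventual_bound[OF assms(1-6)]) (use q elim in auto)
      thus "h q t \<le> a + \<eta>" using elim(1) unfolding c_def by simp
    qed
  qed
qed


lemma diam_set: "{\<bar>x i - x j\<bar> | i j. i \<in> A \<and> j \<in> A} = (\<lambda>(i,j). \<bar>x i - x j\<bar>) ` (A \<times> A)"
  by auto

lemma diam_le_iff:
  assumes "finite A" "A \<noteq> {}"
  shows "diam_idx x A \<le> c \<longleftrightarrow> (\<forall>i\<in>A. \<forall>j\<in>A. x i - x j \<le> c)"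
proof -
  have "diam_idx x A \<le> c \<longleftrightarrow> (\<forall>i\<in>A. \<forall>j\<in>A. \<bar>x i - x j\<bar> \<le> c)"
    unfolding diam_idx_def diam_set using assms by (subst Max_le_iff) auto
  also have "\<dots> \<longleftrightarrow> (\<forall>i\<in>A. \<forall>j\<in>A. x i - x j \<le> c)"
    by (metis abs_le_iff minus_diff_eq)
  finally show ?thesis .
qed

lemma diff_le_diam:
  assumes "finite A" "i \<in> A" "j \<in> A"
  shows "x i - x j \<le> diam_idx x A"
proof -
  have "\<bar>x i - x j\<bar> \<le> diam_idx x A"
    unfolding diam_idx_def diam_set using assms by (intro Max_ge) auto
  thus ?thesis by simp
qed

locale kur =
  fixes N :: nat and \<nu> :: "nat \<Rightarrow> real" and \<kappa> \<gamma> l :: real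
    and \<Theta> :: "nat \<Rightarrow> real \<Rightarrow> real" and A B :: "nat set"
  assumes N: "N \<ge> 2"
    and AB: "A \<subseteq> B" and BN: "B \<subseteq> {1..N}"
    and \<gamma>: "1/2 < \<gamma>" "\<gamma> \<le> 1"
    and l: "0 < l" "l < 2 * arccos (1/\<gamma> - 1)"
    and \<kappa>: "\<kappa> > diam_idx \<nu> B / (\<gamma> * sin l - 2 * (1 - \<gamma>) * sin (l / 2))"
    and cardA: "real (card A) \<ge> \<gamma> * real N"
    and deriv: "\<And>i t. i \<in> {1..N} \<Longrightarrow> t \<ge> 0 \<Longrightarrow>
       ((\<Theta> i) has_real_derivative (\<nu> i + \<kappa> / real N * (\<Sum>j=1..N. sin (\<Theta> j t - \<Theta> i t)))) (at t within {0..})"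
    and init: "\<And>i j. i \<in> A \<Longrightarrow> j \<in> A \<Longrightarrow> \<Theta> i 0 - \<Theta> j 0 \<le> l"
begin

definition "d = diam_idx \<nu> B"
definition "f = f_gamma \<gamma>"
definition "r = d / \<kappa>"
definition "\<phi> = phi1 \<gamma> \<kappa> d"
definition "c = 1/\<gamma> - 1"
definition "\<theta>0 = arccos c"

lemma finB: "finite B" using BN finite_subset by blast
lemma finA: "finite A" using AB finB finite_subset by blast
lemma Npos: "real N > 0" using N by simp
lemma A_ne: "A \<noteq> {}"
proof
  assume "A = {}"
  hence "\<gamma> * real N \<le> 0" using cardA by simp
  moreover have "\<gamma> * real N > 0" using \<gamma> Npos by simp
  ultimately show False by simp
qed
lemma AN: "A \<subseteq> {1..N}" using AB BN by blast
lemma c: "0 \<le> c" "c < 1" using \<gamma> by (auto simp: c_def field_simps)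
lemma c_alt: "(1 - \<gamma>) / \<gamma> = c" using \<gamma> by (simp add: c_def field_simps)
lemma th0: "0 < \<theta>0" "\<theta>0 \<le> pi/2"
  using c arccos_le_pi2[of c] arccos_lt_bounded[of c] by (auto simp: \<theta>0_def)
lemma cos_th0: "cos \<theta>0 = c" using c by (simp add: \<theta>0_def)
lemma l_lt_pi: "l < pi" using l th0 by (simp add: \<theta>0_def c_def)
lemma l_lt: "l < 2 * \<theta>0" using l by (simp add: \<theta>0_def c_def)

lemma f_pos: "0 < x \<Longrightarrow> x < 2 * \<theta>0 \<Longrightarrow> f x > 0"
proof -
  assume x: "0 < x" "x < 2 * \<theta>0"
  have s: "sin (x/2) > 0" using x th0 by (intro sin_gt_zero) auto
  have "cos (x/2) > cos \<theta>0" using x th0 by (intro cos_monotone_0_pi) auto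
  hence "\<gamma> * cos (x/2) > \<gamma> * c" using \<gamma> cos_th0 by simp
  moreover have "\<gamma> * c = 1 - \<gamma>" using \<gamma> by (simp add: c_def field_simps)
  ultimately have "\<gamma> * cos (x/2) - (1 - \<gamma>) > 0" by linarith
  thus "f x > 0" using s unfolding f_def f_half by simp
qed

lemma fl: "f l > 0" using f_pos l l_lt by simp

lemma d_nonneg: "d \<ge> 0"
proof -
  obtain i where "i \<in> A" using A_ne by blast
  hence "i \<in> B" using AB by blast
  from diff_le_diam[OF finB this this] show ?thesis by (simp add: d_def)
qed

lemma \<kappa>f: "\<kappa> * f l > d"
proof -
  have "d / f l < \<kappa>" using \<kappa> by (simp add: d_def f_def f_gamma_def)
  thus ?thesis using fl by (simp add: pos_divide_less_eq mult.commute)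
qed

lemma \<kappa>pos: "\<kappa> > 0"
proof -
  have "d / f l \<ge> 0" using d_nonneg fl by simp
  moreover have "d / f l < \<kappa>" using \<kappa> by (simp add: d_def f_def f_gamma_def)
  ultimately show ?thesis by simp
qed

lemma r: "0 \<le> r" "r < f l" "\<kappa> * r = d"
  using d_nonneg \<kappa>pos \<kappa>f by (auto simp: r_def pos_divide_less_eq mult.commute)

lemma f_cont: "continuous_on S f"
  unfolding f_def f_gamma_def by (intro continuous_intros) auto

lemma f0: "f 0 = 0" by (simp add: f_def f_gamma_def)

definition "R = {\<theta>. 0 \<le> \<theta> \<and> \<theta> < 2 * arccos ((1 - \<gamma>) / \<gamma>) \<and> f_gamma \<gamma> \<theta> = d / \<kappa>}"

lemma phi_R: "\<phi> = Inf R" by (simp add: \<phi>_def phi1_def R_def)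

lemma R_alt: "R = {\<theta>. 0 \<le> \<theta> \<and> \<theta> < 2 * \<theta>0 \<and> f \<theta> = r}"
  by (simp add: R_def c_alt \<theta>0_def f_def r_def)

lemma root_l: "\<exists>x. 0 \<le> x \<and> x \<le> l \<and> f x = r"
  using IVT'[of f 0 r l] f0 r l f_cont by auto

lemma R_ne: "R \<noteq> {}" and R_bdd: "bdd_below R"
proof -
  obtain x where "0 \<le> x" "x \<le> l" "f x = r" using root_l by blast
  hence "x \<in> R" using l_lt by (auto simp: R_alt)
  thus "R \<noteq> {}" by blast
  show "bdd_below R" by (auto simp: R_alt bdd_below_def)
qed

lemma phi_props: "f \<phi> = r" "0 \<le> \<phi>" "\<phi> < l"
proof -
  have "\<phi> \<in> closure R" unfolding phi_R by (rule closure_contains_Inf[OF R_ne R_bdd])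
  moreover have "closure R \<subseteq> {x. f x = r}"
    by (rule closure_minimal) (auto simp: R_alt intro!: closed_Collect_eq f_cont continuous_intros)
  ultimately show fphi: "f \<phi> = r" by blast
  show "0 \<le> \<phi>" unfolding phi_R using R_ne by (intro cInf_greatest) (auto simp: R_alt)
  obtain x where x: "0 \<le> x" "x \<le> l" "f x = r" using root_l by blast
  hence "x \<in> R" using l_lt by (auto simp: R_alt)
  hence "\<phi> \<le> l" unfolding phi_R using R_bdd x by (meson cInf_lower order.trans)
  moreover have "\<phi> \<noteq> l" using fphi r by auto
  ultimately show "\<phi> < l" by simp
qed

lemma phi_min: "0 \<le> x \<Longrightarrow> x < 2 * \<theta>0 \<Longrightarrow> f x = r \<Longrightarrow> \<phi> \<le> x"
  unfolding phi_R using R_bdd by (intro cInf_lower) (auto simp: R_alt)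

lemma f_lower:
  assumes "\<phi> \<le> x" "x \<le> l"
  shows "f x \<ge> r + (f l - r) * (x - \<phi>) / (l - \<phi>)"
proof -
  have cc: "concave_on {0..l} f" unfolding f_def using f_concave[OF \<gamma> l] .
  have "concave_on {\<phi>..l} f" using cc phi_props convex_on_subset[of "{0..l}" "\<lambda>x. - f x" "{\<phi>..l}"]
    unfolding concave_on_def by (auto simp: convex_real_interval)
  from concave_onD_Icc'[OF this, of x] assms
  have "f x \<ge> (f l - f \<phi>) / (l - \<phi>) * (x - \<phi>) + f \<phi>" by simp
  thus ?thesis using phi_props by (simp add: field_simps)
qed

end


context kur begin

lemma dTheta: "i \<in> {1..N} \<Longrightarrow> 0 \<le> T \<Longrightarrow> T \<le> t \<Longrightarrow>
  ((\<Theta> i) has_real_derivative (\<nu> i + \<kappa> / real N * (\<Sum>j=1..N. sin (\<Theta> j t - \<Theta> i t)))) (at t within {T..})"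
  by (rule DERIV_subset[OF deriv]) auto

definition "dp i k t = \<nu> i - \<nu> k + \<kappa> / real N * (\<Sum>j=1..N. sin (\<Theta> j t - \<Theta> i t) - sin (\<Theta> j t - \<Theta> k t))"

lemma dpair: "i \<in> {1..N} \<Longrightarrow> k \<in> {1..N} \<Longrightarrow> 0 \<le> T \<Longrightarrow> T \<le> t \<Longrightarrow>
  ((\<lambda>t. \<Theta> i t - \<Theta> k t) has_real_derivative dp i k t) (at t within {T..})"
proof -
  assume a: "i \<in> {1..N}" "k \<in> {1..N}" "0 \<le> T" "T \<le> t"
  have eq: "(\<nu> i + \<kappa> / real N * (\<Sum>j=1..N. sin (\<Theta> j t - \<Theta> i t))) - (\<nu> k + \<kappa> / real N * (\<Sum>j=1..N. sin (\<Theta> j t - \<Theta> k t)))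
    = dp i k t" by (simp add: dp_def sum_subtractf right_diff_distrib)
  show ?thesis using DERIV_diff[OF dTheta[OF a(1,3,4)] dTheta[OF a(2,3,4)]] unfolding eq .
qed

lemma nu_diff: "i \<in> B \<Longrightarrow> k \<in> B \<Longrightarrow> \<nu> i - \<nu> k \<le> d"
  unfolding d_def by (rule diff_le_diam[OF finB])

lemma scale_sum:
  assumes "S \<le> - real N * y"
  shows "\<kappa> / real N * S \<le> - \<kappa> * y"
proof -
  have "\<kappa> / real N * S \<le> \<kappa> / real N * (- real N * y)"
    using assms \<kappa>pos Npos by (intro mult_left_mono) auto
  also have "\<dots> = - \<kappa> * y" using Npos by simp
  finally show ?thesis .
qed

lemma K1_cond:
  assumes a: "\<phi> < a" "a < l"
    and ij: "i \<in> A" "j \<in> A" and t: "t \<ge> 0"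
    and mx: "\<forall>q\<in>A \<times> A. \<Theta> (fst q) t - \<Theta> (snd q) t \<le> \<Theta> i t - \<Theta> j t"
    and D: "a \<le> \<Theta> i t - \<Theta> j t" "\<Theta> i t - \<Theta> j t \<le> l"
  shows "dp i j t \<le> - (\<kappa> * (f l - r) * (a - \<phi>) / (l - \<phi>))"
proof -
  define D where "D = \<Theta> i t - \<Theta> j t"
  define \<delta> where "\<delta> k = \<Theta> k t - \<Theta> j t" for k
  have \<delta>: "0 \<le> \<delta> k \<and> \<delta> k \<le> D" if k: "k \<in> A" for k
  proof -
    have "\<Theta> i t - \<Theta> k t \<le> \<Theta> i t - \<Theta> j t" using mx ij k by force
    moreover have "\<Theta> k t - \<Theta> j t \<le> \<Theta> i t - \<Theta> j t" using mx ij k by force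
    ultimately show ?thesis by (simp add: \<delta>_def D_def)
  qed
  have D0: "0 \<le> D" "D \<le> pi" using D a phi_props l_lt_pi by (auto simp: D_def)
  have seq: "(\<Sum>k=1..N. sin (\<Theta> k t - \<Theta> i t) - sin (\<Theta> k t - \<Theta> j t)) = (\<Sum>k=1..N. sin (\<delta> k - D) - sin (\<delta> k))"
    by (intro sum.cong) (simp_all add: \<delta>_def D_def)
  have "(\<Sum>k=1..N. sin (\<delta> k - D) - sin (\<delta> k)) \<le> - real N * f_gamma \<gamma> D"
    apply (rule core[OF AN D0]) using \<delta> cardA by auto
  hence s: "\<kappa> / real N * (\<Sum>k=1..N. sin (\<Theta> k t - \<Theta> i t) - sin (\<Theta> k t - \<Theta> j t)) \<le> - \<kappa> * f D"
    unfolding seq f_def by (rule scale_sum)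
  have nd: "\<nu> i - \<nu> j \<le> d" using ij AB by (intro nu_diff) auto
  have fD: "f D \<ge> r + (f l - r) * (D - \<phi>) / (l - \<phi>)" using f_lower[of D] D a by (simp add: D_def)
  have "(f l - r) * (a - \<phi>) / (l - \<phi>) \<le> (f l - r) * (D - \<phi>) / (l - \<phi>)"
    using D r phi_props by (intro divide_right_mono mult_left_mono) (auto simp: D_def)
  hence "f D \<ge> r + (f l - r) * (a - \<phi>) / (l - \<phi>)" using fD by linarith
  hence "\<kappa> * f D \<ge> \<kappa> * (r + (f l - r) * (a - \<phi>) / (l - \<phi>))" using \<kappa>pos by (simp add: mult_left_mono)
  hence "\<kappa> * f D \<ge> \<kappa> * r + \<kappa> * ((f l - r) * (a - \<phi>) / (l - \<phi>))" by (simp add: distrib_left)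
  moreover have "\<kappa> * ((f l - r) * (a - \<phi>) / (l - \<phi>)) = \<kappa> * (f l - r) * (a - \<phi>) / (l - \<phi>)" by simp
  ultimately have "\<kappa> * f D \<ge> d + \<kappa> * (f l - r) * (a - \<phi>) / (l - \<phi>)" using r(3) by linarith
  thus ?thesis using s nd unfolding dp_def by linarith
qed

lemma K1_C: "\<phi> < a \<Longrightarrow> a < l \<Longrightarrow> \<kappa> * (f l - r) * (a - \<phi>) / (l - \<phi>) > 0"
  using \<kappa>pos r phi_props by simp

lemma K1_bound:
  assumes a: "\<phi> < a" "a < l" and t: "t \<ge> 0" and q: "q \<in> A \<times> A"
  shows "\<Theta> (fst q) t - \<Theta> (snd q) t \<le> a + (l - a) * exp (- ((\<kappa> * (f l - r) * (a - \<phi>) / (l - \<phi>)) / (2 * (l - a))) * (t - 0))"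
proof (rule eventual_bound[where h = "\<lambda>p t. \<Theta> (fst p) t - \<Theta> (snd p) t" and h' = "\<lambda>p t. dp (fst p) (snd p) t"])
  show "finite (A \<times> A)" using finA by simp
  show "a < l" by fact
  show "\<kappa> * (f l - r) * (a - \<phi>) / (l - \<phi>) > 0" using K1_C a .
  show "q \<in> A \<times> A" "0 \<le> t" using q t by auto
next
  fix p and s :: real assume "p \<in> A \<times> A" "0 \<le> s"
  thus "((\<lambda>t. \<Theta> (fst p) t - \<Theta> (snd p) t) has_real_derivative dp (fst p) (snd p) s) (at s within {0..})"
    using AN by (intro dpair) auto
next
  fix p and s :: real assume p: "p \<in> A \<times> A" and s: "0 \<le> s"
    and mx: "\<forall>q\<in>A \<times> A. \<Theta> (fst q) s - \<Theta> (snd q) s \<le> \<Theta> (fst p) s - \<Theta> (snd p) s"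
    and D: "a \<le> \<Theta> (fst p) s - \<Theta> (snd p) s" "\<Theta> (fst p) s - \<Theta> (snd p) s \<le> l"
  show "dp (fst p) (snd p) s \<le> - (\<kappa> * (f l - r) * (a - \<phi>) / (l - \<phi>))"
    using p by (intro K1_cond[OF a _ _ s mx D]) auto
next
  fix q assume "q \<in> A \<times> A" thus "\<Theta> (fst q) 0 - \<Theta> (snd q) 0 \<le> l" using init by auto
qed

lemma part1a: "t \<ge> 0 \<Longrightarrow> i \<in> A \<Longrightarrow> j \<in> A \<Longrightarrow> \<Theta> i t - \<Theta> j t \<le> l"
proof -
  assume t: "t \<ge> 0" and ij: "i \<in> A" "j \<in> A"
  define a where "a = (\<phi> + l) / 2"
  have a: "\<phi> < a" "a < l" using phi_props by (auto simp: a_def)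
  have "\<Theta> (fst (i,j)) t - \<Theta> (snd (i,j)) t \<le> a + (l - a) * exp (- ((\<kappa> * (f l - r) * (a - \<phi>) / (l - \<phi>)) / (2 * (l - a))) * (t - 0))"
    using ij by (intro K1_bound[OF a t]) auto
  moreover have "exp (- ((\<kappa> * (f l - r) * (a - \<phi>) / (l - \<phi>)) / (2 * (l - a))) * (t - 0)) \<le> 1"
  proof -
    have "0 \<le> ((\<kappa> * (f l - r) * (a - \<phi>) / (l - \<phi>)) / (2 * (l - a)))"
      by (rule divide_nonneg_pos[OF less_imp_le[OF K1_C[OF a]]]) (use a in simp)
    hence "0 \<le> ((\<kappa> * (f l - r) * (a - \<phi>) / (l - \<phi>)) / (2 * (l - a))) * (t - 0)"
      using t by (intro mult_nonneg_nonneg) auto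
    thus ?thesis by simp
  qed
  ultimately show ?thesis using a mult_left_le[of _ "l - a"] by (smt (verit) fst_conv snd_conv)
qed

lemma K1_ev:
  assumes a: "\<phi> < a" "a < l" and eta: "\<eta> > 0"
  shows "eventually (\<lambda>t. \<forall>q\<in>A \<times> A. \<Theta> (fst q) t - \<Theta> (snd q) t \<le> a + \<eta>) at_top"
proof (rule eventual_bound'[where h' = "\<lambda>p t. dp (fst p) (snd p) t" and T = 0 and U = l and C = "\<kappa> * (f l - r) * (a - \<phi>) / (l - \<phi>)"])
  show "finite (A \<times> A)" using finA by simp
  show "a < l" by fact
  show "\<kappa> * (f l - r) * (a - \<phi>) / (l - \<phi>) > 0" using K1_C a .
  show "\<eta> > 0" by fact
next
  fix p and s :: real assume "p \<in> A \<times> A" "0 \<le> s"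
  thus "((\<lambda>t. \<Theta> (fst p) t - \<Theta> (snd p) t) has_real_derivative dp (fst p) (snd p) s) (at s within {0..})"
    using AN by (intro dpair) auto
next
  fix p and s :: real assume p: "p \<in> A \<times> A" and s: "0 \<le> s"
    and mx: "\<forall>q\<in>A \<times> A. \<Theta> (fst q) s - \<Theta> (snd q) s \<le> \<Theta> (fst p) s - \<Theta> (snd p) s"
    and D: "a \<le> \<Theta> (fst p) s - \<Theta> (snd p) s" "\<Theta> (fst p) s - \<Theta> (snd p) s \<le> l"
  show "dp (fst p) (snd p) s \<le> - (\<kappa> * (f l - r) * (a - \<phi>) / (l - \<phi>))"
    using p by (intro K1_cond[OF a _ _ s mx D]) auto
next
  fix q assume "q \<in> A \<times> A" thus "\<Theta> (fst q) 0 - \<Theta> (snd q) 0 \<le> l" using init by auto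
qed

lemma near:
  assumes "\<epsilon> > 0"
  shows "\<exists>T\<ge>0. \<forall>t\<ge>T. \<forall>i\<in>A. \<forall>j\<in>A. \<Theta> i t - \<Theta> j t \<le> \<phi> + \<epsilon>"
proof -
  define a where "a = \<phi> + min (\<epsilon>/2) ((l - \<phi>)/2)"
  have m: "min (\<epsilon>/2) ((l - \<phi>)/2) \<le> (l - \<phi>)/2" "min (\<epsilon>/2) ((l - \<phi>)/2) \<le> \<epsilon>/2"
    "min (\<epsilon>/2) ((l - \<phi>)/2) > 0" using phi_props assms by (simp_all only: min.cobounded1 min.cobounded2) auto
  have a1: "\<phi> < a" using m unfolding a_def by argo
  have a2: "a < l" using phi_props m unfolding a_def by argo
  have a3: "a \<le> \<phi> + \<epsilon>/2" using m unfolding a_def by argo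
  note a = a1 a2 a3
  have "eventually (\<lambda>t. \<forall>q\<in>A \<times> A. \<Theta> (fst q) t - \<Theta> (snd q) t \<le> a + \<epsilon>/2) at_top"
    using assms by (intro K1_ev[OF a(1,2)]) auto
  then obtain T where T: "\<And>t. t \<ge> T \<Longrightarrow> \<forall>q\<in>A \<times> A. \<Theta> (fst q) t - \<Theta> (snd q) t \<le> a + \<epsilon>/2"
    unfolding eventually_at_top_linorder by blast
  show ?thesis
  proof (intro exI[of _ "max T 0"] conjI allI impI ballI)
    fix t i j assume t: "max T 0 \<le> t" and ij: "i \<in> A" "j \<in> A"
    have "\<Theta> (fst (i,j)) t - \<Theta> (snd (i,j)) t \<le> a + \<epsilon>/2" using T[of t] t ij by auto
    thus "\<Theta> i t - \<Theta> j t \<le> \<phi> + \<epsilon>" using a by simp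
  qed simp
qed

end


lemma exists_n:
  fixes g :: "nat \<Rightarrow> real"
  assumes "finite A" "l > 0"
  shows "\<exists>n::nat. \<forall>i\<in>A. g i \<le> l + 2 * pi * real n"
proof (cases "A = {}")
  case True thus ?thesis by auto
next
  case False
  define M0 where "M0 = Max (g ` A)"
  define n where "n = nat \<lceil>M0 / (2 * pi)\<rceil>"
  have "M0 / (2 * pi) \<le> real n" unfolding n_def by (rule real_nat_ceiling_ge)
  hence M0: "M0 \<le> 2 * pi * real n" by (simp add: divide_le_eq mult.commute)
  show ?thesis
  proof (intro exI[of _ n] ballI)
    fix i assume "i \<in> A"
    hence "g i \<le> M0" unfolding M0_def using assms by (intro Max_ge) auto
    thus "g i \<le> l + 2 * pi * real n" using M0 assms by linarith
  qed
qed

context kur begin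

lemma upper_k:
  assumes k: "k \<in> B"
  shows "\<exists>b. \<forall>t\<ge>0. \<forall>i\<in>A. \<Theta> k t - \<Theta> i t \<le> b"
proof -
  have kN: "k \<in> {1..N}" using k BN by blast
  obtain n :: nat where n: "\<forall>i\<in>A. \<Theta> k 0 - \<Theta> i 0 \<le> l + 2 * pi * real n"
    using exists_n[where g = "\<lambda>i. \<Theta> k 0 - \<Theta> i 0", OF finA l(1)] by blast
  have "\<Theta> k t - \<Theta> i t \<le> l + 2 * pi * real n" if t: "t \<ge> 0" and i: "i \<in> A" for t i
  proof (rule barrier[where h = "\<lambda>i t. \<Theta> k t - \<Theta> i t" and h' = "\<lambda>i t. dp k i t"
        and \<beta> = "\<lambda>_. l + 2 * pi * real n" and \<beta>' = "\<lambda>_. 0" and T = 0 and P = A])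
    show "finite A" by (rule finA)
    show "i \<in> A" "0 \<le> t" using i t by auto
  next
    fix p and s :: real assume "p \<in> A" "0 \<le> s"
    thus "((\<lambda>t. \<Theta> k t - \<Theta> p t) has_real_derivative dp k p s) (at s within {0..})"
      using AN kN by (intro dpair) auto
  next
    fix s :: real show "((\<lambda>_. l + 2 * pi * real n) has_real_derivative 0) (at s within {0..})"
      by (rule DERIV_const)
  next
    fix q assume "q \<in> A" thus "\<Theta> k 0 - \<Theta> q 0 \<le> l + 2 * pi * real n" using n by auto
  next
    fix p and s :: real assume p: "p \<in> A" and s: "0 \<le> s" and eq: "\<Theta> k s - \<Theta> p s = l + 2 * pi * real n"
      and all: "\<forall>q\<in>A. \<Theta> k s - \<Theta> q s \<le> l + 2 * pi * real n"
    define \<delta> where "\<delta> j = \<Theta> j s - \<Theta> p s" for j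
    have \<delta>: "0 \<le> \<delta> j \<and> \<delta> j \<le> l" if j: "j \<in> A" for j
      using all j eq part1a[OF s j p] by (auto simp: \<delta>_def)
    have sh: "sin (\<Theta> j s - \<Theta> k s) = sin (\<delta> j - l)" for j
    proof -
      have "\<Theta> j s - \<Theta> k s = (\<delta> j - l) + 2 * pi * real_of_int (- int n)" using eq by (simp add: \<delta>_def algebra_simps)
      thus ?thesis by (simp only: sin_shift_int)
    qed
    have seq: "(\<Sum>j=1..N. sin (\<Theta> j s - \<Theta> k s) - sin (\<Theta> j s - \<Theta> p s)) = (\<Sum>j=1..N. sin (\<delta> j - l) - sin (\<delta> j))"
      by (intro sum.cong) (simp_all add: sh \<delta>_def)
    have l0: "0 \<le> l" "l \<le> pi" using l l_lt_pi by auto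
    have "(\<Sum>j=1..N. sin (\<delta> j - l) - sin (\<delta> j)) \<le> - real N * f_gamma \<gamma> l"
      apply (rule core[OF AN l0]) using \<delta> cardA by auto
    hence sc: "\<kappa> / real N * (\<Sum>j=1..N. sin (\<Theta> j s - \<Theta> k s) - sin (\<Theta> j s - \<Theta> p s)) \<le> - \<kappa> * f l"
      unfolding seq f_def by (rule scale_sum)
    have "\<nu> k - \<nu> p \<le> d" using k p AB by (intro nu_diff) auto
    thus "dp k p s < 0" using sc \<kappa>f unfolding dp_def by linarith
  qed
  thus ?thesis by blast
qed

lemma lower_k:
  assumes k: "k \<in> B"
  shows "\<exists>b. \<forall>t\<ge>0. \<forall>i\<in>A. \<Theta> i t - \<Theta> k t \<le> b"
proof -
  have kN: "k \<in> {1..N}" using k BN by blast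
  obtain n :: nat where n: "\<forall>i\<in>A. \<Theta> i 0 - \<Theta> k 0 \<le> l + 2 * pi * real n"
    using exists_n[where g = "\<lambda>i. \<Theta> i 0 - \<Theta> k 0", OF finA l(1)] by blast
  have "\<Theta> i t - \<Theta> k t \<le> l + 2 * pi * real n" if t: "t \<ge> 0" and i: "i \<in> A" for t i
  proof (rule barrier[where h = "\<lambda>i t. \<Theta> i t - \<Theta> k t" and h' = "\<lambda>i t. dp i k t"
        and \<beta> = "\<lambda>_. l + 2 * pi * real n" and \<beta>' = "\<lambda>_. 0" and T = 0 and P = A])
    show "finite A" by (rule finA)
    show "i \<in> A" "0 \<le> t" using i t by auto
  next
    fix p and s :: real assume "p \<in> A" "0 \<le> s"
    thus "((\<lambda>t. \<Theta> p t - \<Theta> k t) has_real_derivative dp p k s) (at s within {0..})"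
      using AN kN by (intro dpair) auto
  next
    fix s :: real show "((\<lambda>_. l + 2 * pi * real n) has_real_derivative 0) (at s within {0..})"
      by (rule DERIV_const)
  next
    fix q assume "q \<in> A" thus "\<Theta> q 0 - \<Theta> k 0 \<le> l + 2 * pi * real n" using n by auto
  next
    fix p and s :: real assume p: "p \<in> A" and s: "0 \<le> s" and eq: "\<Theta> p s - \<Theta> k s = l + 2 * pi * real n"
      and all: "\<forall>q\<in>A. \<Theta> q s - \<Theta> k s \<le> l + 2 * pi * real n"
    define \<delta> where "\<delta> j = \<Theta> j s - \<Theta> k s - 2 * pi * real n" for j
    have \<delta>: "0 \<le> \<delta> j \<and> \<delta> j \<le> l" if j: "j \<in> A" for j
      using all j eq part1a[OF s p j] by (auto simp: \<delta>_def)
    have sh: "sin (\<Theta> j s - \<Theta> k s) = sin (\<delta> j)" for j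
    proof -
      have "\<Theta> j s - \<Theta> k s = \<delta> j + 2 * pi * real_of_int (int n)" by (simp add: \<delta>_def)
      thus ?thesis by (simp only: sin_shift_int)
    qed
    have sh2: "\<Theta> j s - \<Theta> p s = \<delta> j - l" for j using eq by (simp add: \<delta>_def algebra_simps)
    have seq: "(\<Sum>j=1..N. sin (\<Theta> j s - \<Theta> p s) - sin (\<Theta> j s - \<Theta> k s)) = (\<Sum>j=1..N. sin (\<delta> j - l) - sin (\<delta> j))"
      by (intro sum.cong) (simp_all only: sh sh2)
    have l0: "0 \<le> l" "l \<le> pi" using l l_lt_pi by auto
    have "(\<Sum>j=1..N. sin (\<delta> j - l) - sin (\<delta> j)) \<le> - real N * f_gamma \<gamma> l"
      apply (rule core[OF AN l0]) using \<delta> cardA by auto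
    hence sc: "\<kappa> / real N * (\<Sum>j=1..N. sin (\<Theta> j s - \<Theta> p s) - sin (\<Theta> j s - \<Theta> k s)) \<le> - \<kappa> * f l"
      unfolding seq f_def by (rule scale_sum)
    have "\<nu> p - \<nu> k \<le> d" using k p AB by (intro nu_diff) auto
    thus "dp p k s < 0" using sc \<kappa>f unfolding dp_def by linarith
  qed
  thus ?thesis by blast
qed

lemma part2: "bdd_above ((\<lambda>t. diam_idx (\<lambda>i. \<Theta> i t) B) ` {0..})"
proof -
  obtain bu where bu: "\<And>k. k \<in> B \<Longrightarrow> \<forall>t\<ge>0. \<forall>i\<in>A. \<Theta> k t - \<Theta> i t \<le> bu k"
    using finite_set_choice[OF finB, of "\<lambda>k b. \<forall>t\<ge>0. \<forall>i\<in>A. \<Theta> k t - \<Theta> i t \<le> b"] upper_k by metis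
  obtain bl where bl: "\<And>k. k \<in> B \<Longrightarrow> \<forall>t\<ge>0. \<forall>i\<in>A. \<Theta> i t - \<Theta> k t \<le> bl k"
    using finite_set_choice[OF finB, of "\<lambda>k b. \<forall>t\<ge>0. \<forall>i\<in>A. \<Theta> i t - \<Theta> k t \<le> b"] lower_k by metis
  obtain i0 where i0: "i0 \<in> A" using A_ne by blast
  have Bne: "B \<noteq> {}" using i0 AB by blast
  define M where "M = Max (bu ` B) + Max (bl ` B)"
  show ?thesis unfolding bdd_above_def
  proof (intro exI[of _ M] ballI)
    fix x assume "x \<in> (\<lambda>t. diam_idx (\<lambda>i. \<Theta> i t) B) ` {0..}"
    then obtain t where t: "t \<ge> 0" and x: "x = diam_idx (\<lambda>i. \<Theta> i t) B" by auto
    have "\<Theta> k t - \<Theta> k' t \<le> M" if k: "k \<in> B" "k' \<in> B" for k k'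
    proof -
      have "\<Theta> k t - \<Theta> i0 t \<le> bu k" using bu[OF k(1)] t i0 by auto
      moreover have "\<Theta> i0 t - \<Theta> k' t \<le> bl k'" using bl[OF k(2)] t i0 by auto
      moreover have "bu k \<le> Max (bu ` B)" "bl k' \<le> Max (bl ` B)" using k finB by auto
      ultimately show ?thesis unfolding M_def by linarith
    qed
    thus "x \<le> M" unfolding x using diam_le_iff[OF finB Bne] by blast
  qed
qed

lemma phi_lt_th0:
  assumes H: "r < f \<theta>0"
  shows "\<phi> < \<theta>0"
proof (rule ccontr)
  assume "\<not> \<phi> < \<theta>0"
  hence le: "\<theta>0 \<le> \<phi>" by simp
  obtain x where x: "0 \<le> x" "x \<le> \<theta>0" "f x = r"
    using IVT'[of f 0 r \<theta>0] f0 r H th0 f_cont by auto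
  have "x < 2 * \<theta>0" using x th0 by simp
  hence "\<phi> \<le> x" using phi_min x by blast
  hence "x = \<theta>0" using x le by simp
  thus False using x H by simp
qed

definition "Scos i j t = (\<Sum>k=1..N. cos (\<Theta> k t - (\<Theta> i t + \<Theta> j t) / 2))"

lemma dp_alt: "dp i j t = \<nu> i - \<nu> j - \<kappa> / real N * (2 * sin ((\<Theta> i t - \<Theta> j t) / 2) * Scos i j t)"
proof -
  have "sin (\<Theta> k t - \<Theta> i t) - sin (\<Theta> k t - \<Theta> j t) = - (2 * sin ((\<Theta> i t - \<Theta> j t) / 2) * cos (\<Theta> k t - (\<Theta> i t + \<Theta> j t) / 2))" for k
  proof -
    have "sin (\<Theta> k t - \<Theta> i t) - sin (\<Theta> k t - \<Theta> j t) =
      2 * sin (((\<Theta> k t - \<Theta> i t) - (\<Theta> k t - \<Theta> j t)) / 2) * cos (((\<Theta> k t - \<Theta> i t) + (\<Theta> k t - \<Theta> j t)) / 2)"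
      by (rule sin_diff_sin)
    moreover have "((\<Theta> k t - \<Theta> i t) - (\<Theta> k t - \<Theta> j t)) / 2 = - ((\<Theta> i t - \<Theta> j t) / 2)" by (simp add: field_simps)
    moreover have "((\<Theta> k t - \<Theta> i t) + (\<Theta> k t - \<Theta> j t)) / 2 = \<Theta> k t - (\<Theta> i t + \<Theta> j t) / 2" by (simp add: field_simps)
    ultimately show ?thesis by (simp only: sin_minus)
  qed
  hence "(\<Sum>k=1..N. sin (\<Theta> k t - \<Theta> i t) - sin (\<Theta> k t - \<Theta> j t)) = - (2 * sin ((\<Theta> i t - \<Theta> j t) / 2) * Scos i j t)"
    unfolding Scos_def by (simp add: sum_distrib_left sum_negf)
  thus ?thesis unfolding dp_def by simp
qed

lemma Sbound:
  assumes ij: "i \<in> A" "j \<in> A" and E: "0 \<le> E" "E \<le> pi"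
    and all: "\<forall>a\<in>A. \<forall>b\<in>A. \<Theta> a t - \<Theta> b t \<le> E"
  shows "Scos i j t \<ge> real N * (\<gamma> * cos E - (1 - \<gamma>))" "Scos i j t \<le> real N"
proof -
  have fin: "finite {1..N}" by simp
  have ck: "cos (\<Theta> k t - (\<Theta> i t + \<Theta> j t) / 2) \<ge> cos E" if k: "k \<in> A" for k
  proof -
    have "\<Theta> k t - \<Theta> i t \<le> E" "\<Theta> i t - \<Theta> k t \<le> E" "\<Theta> k t - \<Theta> j t \<le> E" "\<Theta> j t - \<Theta> k t \<le> E"
      using all k ij by auto
    hence "\<bar>\<Theta> k t - (\<Theta> i t + \<Theta> j t) / 2\<bar> \<le> E" by (simp add: abs_le_iff field_simps)
    hence "cos E \<le> cos \<bar>\<Theta> k t - (\<Theta> i t + \<Theta> j t) / 2\<bar>" using E by (intro cos_monotone_0_pi_le) auto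
    thus ?thesis by simp
  qed
  have split: "Scos i j t = (\<Sum>k\<in>A. cos (\<Theta> k t - (\<Theta> i t + \<Theta> j t) / 2)) + (\<Sum>k\<in>{1..N}-A. cos (\<Theta> k t - (\<Theta> i t + \<Theta> j t) / 2))"
    unfolding Scos_def by (subst sum.subset_diff[OF AN fin]) (simp add: add.commute)
  have s1: "(\<Sum>k\<in>A. cos (\<Theta> k t - (\<Theta> i t + \<Theta> j t) / 2)) \<ge> (\<Sum>k\<in>A. cos E)" using ck by (intro sum_mono) auto
  have s2: "(\<Sum>k\<in>{1..N}-A. cos (\<Theta> k t - (\<Theta> i t + \<Theta> j t) / 2)) \<ge> (\<Sum>k\<in>{1..N}-A. -1)"
    by (intro sum_mono) (metis abs_cos_le_one abs_le_D2 minus_le_iff)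
  have cA: "card ({1..N} - A) = N - card A" using AN by (simp add: card_Diff_subset finite_subset)
  have cle: "card A \<le> N" using card_mono[OF fin AN] by simp
  have "Scos i j t \<ge> real (card A) * cos E - real (N - card A)"
    using split s1 s2 cA by simp
  also have "real (card A) * cos E - real (N - card A) = real (card A) * (cos E + 1) - real N"
    using cle by (simp add: of_nat_diff algebra_simps)
  finally have S1: "Scos i j t \<ge> real (card A) * (cos E + 1) - real N" .
  have "\<gamma> * real N * (cos E + 1) \<le> real (card A) * (cos E + 1)"
    by (rule mult_right_mono[OF cardA]) (use cos_ge_minus_one[of E] in linarith)
  moreover have "real N * (\<gamma> * cos E - (1 - \<gamma>)) = \<gamma> * real N * (cos E + 1) - real N" by (simp add: algebra_simps)
  ultimately show "Scos i j t \<ge> real N * (\<gamma> * cos E - (1 - \<gamma>))" using S1 by linarith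
  have "Scos i j t \<le> (\<Sum>k=1..N. (1::real))" unfolding Scos_def by (intro sum_mono) auto
  thus "Scos i j t \<le> real N" by simp
qed

end


context kur begin

definition "s0 = \<gamma> * cos \<phi> - (1 - \<gamma>)"

lemma s0_pos: "r < f \<theta>0 \<Longrightarrow> s0 > 0"
proof -
  assume H: "r < f \<theta>0"
  have "cos \<phi> > cos \<theta>0" using phi_lt_th0[OF H] phi_props th0 by (intro cos_monotone_0_pi) auto
  hence "\<gamma> * cos \<phi> > \<gamma> * c" using \<gamma> cos_th0 by simp
  moreover have "\<gamma> * c = 1 - \<gamma>" using \<gamma> by (simp add: c_def field_simps)
  ultimately show "s0 > 0" unfolding s0_def by linarith
qed

lemma s_eps:
  assumes e: "0 \<le> e" "e \<le> s0 / 2"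
  shows "\<gamma> * cos (\<phi> + e) - (1 - \<gamma>) \<ge> s0 - e"
proof -
  have "cos \<phi> - cos (\<phi> + e) \<le> \<bar>\<phi> - (\<phi> + e)\<bar>" by (rule cos_lip)
  hence "cos (\<phi> + e) \<ge> cos \<phi> - e" using e by simp
  hence "\<gamma> * cos (\<phi> + e) \<ge> \<gamma> * (cos \<phi> - e)" using \<gamma> by (intro mult_left_mono) auto
  moreover have "\<gamma> * e \<le> e" using \<gamma> e by (simp add: mult_left_le_one_le)
  ultimately show ?thesis unfolding s0_def by (simp add: right_diff_distrib)
qed

lemma UB:
  assumes H: "r < f \<theta>0" and ij: "i \<in> A" "j \<in> A" and b: "0 < b" "b \<le> \<phi>"
    and gap: "2 * sin (b/2) * s0 > (\<nu> i - \<nu> j) / \<kappa>" and eta: "\<eta> > 0"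
  shows "eventually (\<lambda>t. \<Theta> i t - \<Theta> j t \<le> b + \<eta>) at_top"
proof -
  have s0: "s0 > 0" by (rule s0_pos[OF H])
  have pt: "\<phi> < \<theta>0" by (rule phi_lt_th0[OF H])
  define \<sigma> where "\<sigma> = 2 * sin (b/2)"
  have \<sigma>: "\<sigma> > 0" unfolding \<sigma>_def using b pt th0 by (intro mult_pos_pos sin_gt_zero) auto
  define q where "q = (\<nu> i - \<nu> j) / \<kappa>"
  have "\<sigma> * s0 > q" using gap unfolding \<sigma>_def q_def .
  hence "q / \<sigma> < s0" using \<sigma> by (simp add: pos_divide_less_eq mult.commute)
  hence gap': "s0 - q / \<sigma> > 0" by simp
  define \<epsilon> where "\<epsilon> = min ((\<theta>0 - \<phi>)/2) (min ((s0 - q / \<sigma>)/2) (s0/2))"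
  have e1: "\<epsilon> \<le> (\<theta>0 - \<phi>)/2" "\<epsilon> \<le> (s0 - q / \<sigma>)/2" "\<epsilon> \<le> s0/2" unfolding \<epsilon>_def
    by (rule min.cobounded1, meson min.cobounded1 min.cobounded2 order.trans, meson min.cobounded2 order.trans)
  have e0: "\<epsilon> > 0" unfolding \<epsilon>_def using pt gap' s0 by auto
  define se where "se = \<gamma> * cos (\<phi> + \<epsilon>) - (1 - \<gamma>)"
  have se: "se \<ge> s0 - \<epsilon>" unfolding se_def using e0 e1 by (intro s_eps) auto
  have se_pos: "se > 0" using se e1 s0 by argo
  have se_q: "\<sigma> * se > q"
  proof -
    have "se > q / \<sigma>" using se e1 gap' by argo
    thus ?thesis using \<sigma> by (simp add: field_simps)
  qed
  define C where "C = \<kappa> * (\<sigma> * se) - (\<nu> i - \<nu> j)"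
  have C: "C > 0"
  proof -
    have "\<kappa> * q = \<nu> i - \<nu> j" using \<kappa>pos by (simp add: q_def)
    moreover have "\<kappa> * (\<sigma> * se) > \<kappa> * q" using se_q \<kappa>pos by simp
    ultimately show ?thesis unfolding C_def by simp
  qed
  obtain T where T: "T \<ge> 0" "\<And>t i j. t \<ge> T \<Longrightarrow> i \<in> A \<Longrightarrow> j \<in> A \<Longrightarrow> \<Theta> i t - \<Theta> j t \<le> \<phi> + \<epsilon>"
    using near[OF e0] by blast
  have E: "0 \<le> \<phi> + \<epsilon>" "\<phi> + \<epsilon> \<le> pi/2" using phi_props e0 e1 th0 by argo+
  define U where "U = max (\<Theta> i T - \<Theta> j T) b + 1"
  have "eventually (\<lambda>t. \<forall>u\<in>(UNIV::unit set). \<Theta> i t - \<Theta> j t \<le> b + \<eta>) at_top"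
  proof (rule eventual_bound'[where h = "\<lambda>_ t. \<Theta> i t - \<Theta> j t" and h' = "\<lambda>_ t. dp i j t" and T = T and U = U and C = C])
    show "finite (UNIV :: unit set)" by simp
    show "b < U" unfolding U_def by simp
    show "C > 0" by (rule C)
    show "\<eta> > 0" by (rule eta)
  next
    fix p :: unit and s :: real assume "T \<le> s"
    thus "((\<lambda>t. \<Theta> i t - \<Theta> j t) has_real_derivative dp i j s) (at s within {T..})"
      using AN ij T by (intro dpair) auto
  next
    fix q :: unit show "\<Theta> i T - \<Theta> j T \<le> U" unfolding U_def by simp
  next
    fix p :: unit and s :: real assume s: "T \<le> s" and xb: "b \<le> \<Theta> i s - \<Theta> j s"
    have all: "\<forall>a\<in>A. \<forall>b\<in>A. \<Theta> a s - \<Theta> b s \<le> \<phi> + \<epsilon>" using T s by blast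
    have xu: "\<Theta> i s - \<Theta> j s \<le> \<phi> + \<epsilon>" using all ij by blast
    have sin_ge: "sin (b/2) \<le> sin ((\<Theta> i s - \<Theta> j s)/2)"
      using xb xu E b by (intro sin_monotone_2pi_le) auto
    have Sge: "Scos i j s \<ge> real N * se" unfolding se_def
      using Sbound(1)[OF ij, of "\<phi> + \<epsilon>" s] E all by auto
    have "\<sigma> * (real N * se) \<le> (2 * sin ((\<Theta> i s - \<Theta> j s)/2)) * Scos i j s"
      using sin_ge Sge \<sigma> se_pos Npos unfolding \<sigma>_def by (intro mult_mono) auto
    hence "\<kappa> / real N * (\<sigma> * (real N * se)) \<le> \<kappa> / real N * ((2 * sin ((\<Theta> i s - \<Theta> j s)/2)) * Scos i j s)"
      using \<kappa>pos Npos by (intro mult_left_mono) auto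
    moreover have "\<kappa> / real N * (\<sigma> * (real N * se)) = \<kappa> * (\<sigma> * se)" using Npos by simp
    ultimately show "dp i j s \<le> - C" unfolding dp_alt C_def by linarith
  qed
  thus ?thesis by simp
qed

lemma LB:
  assumes H: "r < f \<theta>0" and ij: "i \<in> A" "j \<in> A" and gt: "\<nu> i > \<nu> j"
    and b: "b < (\<nu> i - \<nu> j) / \<kappa>" and eta: "\<eta> > 0"
  shows "eventually (\<lambda>t. \<Theta> j t - \<Theta> i t \<le> - b + \<eta>) at_top"
proof -
  have s0: "s0 > 0" by (rule s0_pos[OF H])
  have pt: "\<phi> < \<theta>0" by (rule phi_lt_th0[OF H])
  define \<epsilon> where "\<epsilon> = min ((\<theta>0 - \<phi>)/2) (s0/2)"
  have e1: "\<epsilon> \<le> (\<theta>0 - \<phi>)/2" "\<epsilon> \<le> s0/2" unfolding \<epsilon>_def by (rule min.cobounded1, rule min.cobounded2)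
  have e0: "\<epsilon> > 0" unfolding \<epsilon>_def using pt s0 by auto
  define se where "se = \<gamma> * cos (\<phi> + \<epsilon>) - (1 - \<gamma>)"
  have se: "se \<ge> s0 - \<epsilon>" unfolding se_def using e0 e1 by (intro s_eps) auto
  have se_pos: "se > 0" using se e1 s0 by argo
  define C where "C = (\<nu> i - \<nu> j) - \<kappa> * max b 0"
  have C: "C > 0"
  proof -
    have "\<kappa> * b < \<nu> i - \<nu> j" using b \<kappa>pos by (simp add: pos_less_divide_eq mult.commute)
    thus ?thesis unfolding C_def using gt by (auto simp: max_def)
  qed
  obtain T where T: "T \<ge> 0" "\<And>t i j. t \<ge> T \<Longrightarrow> i \<in> A \<Longrightarrow> j \<in> A \<Longrightarrow> \<Theta> i t - \<Theta> j t \<le> \<phi> + \<epsilon>"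
    using near[OF e0] by blast
  have E: "0 \<le> \<phi> + \<epsilon>" "\<phi> + \<epsilon> \<le> pi/2" using phi_props e0 e1 th0 by argo+
  define U where "U = max (\<Theta> j T - \<Theta> i T) (- b) + 1"
  have "eventually (\<lambda>t. \<forall>u\<in>(UNIV::unit set). \<Theta> j t - \<Theta> i t \<le> - b + \<eta>) at_top"
  proof (rule eventual_bound'[where h = "\<lambda>_ t. \<Theta> j t - \<Theta> i t" and h' = "\<lambda>_ t. dp j i t" and T = T and U = U and C = C])
    show "finite (UNIV :: unit set)" by simp
    show "- b < U" unfolding U_def by simp
    show "C > 0" by (rule C)
    show "\<eta> > 0" by (rule eta)
  next
    fix p :: unit and s :: real assume "T \<le> s"
    thus "((\<lambda>t. \<Theta> j t - \<Theta> i t) has_real_derivative dp j i s) (at s within {T..})"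
      using AN ij T by (intro dpair) auto
  next
    fix q :: unit show "\<Theta> j T - \<Theta> i T \<le> U" unfolding U_def by simp
  next
    fix p :: unit and s :: real assume s: "T \<le> s" and yb: "- b \<le> \<Theta> j s - \<Theta> i s"
    have all: "\<forall>a\<in>A. \<forall>b\<in>A. \<Theta> a s - \<Theta> b s \<le> \<phi> + \<epsilon>" using T s by blast
    have yu: "\<Theta> j s - \<Theta> i s \<le> \<phi> + \<epsilon>" "\<Theta> i s - \<Theta> j s \<le> \<phi> + \<epsilon>" using all ij by blast+
    have Sge: "Scos j i s \<ge> real N * se" unfolding se_def
      using Sbound(1)[OF ij(2,1), of "\<phi> + \<epsilon>" s] E all by auto
    hence S0: "Scos j i s \<ge> 0" using se_pos Npos by (meson order.trans mult_nonneg_nonneg less_imp_le)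
    have SN: "Scos j i s \<le> real N" using Sbound(2)[OF ij(2,1), of "\<phi> + \<epsilon>" s] E all by auto
    define y where "y = \<Theta> j s - \<Theta> i s"
    have "\<kappa> / real N * (2 * sin (y / 2) * Scos j i s) \<ge> - (\<kappa> * max b 0)"
    proof (cases "y \<ge> 0")
      case True
      have "sin (y/2) \<ge> 0" using True yu E by (intro sin_ge_zero) (auto simp: y_def)
      hence "0 \<le> \<kappa> / real N * (2 * sin (y / 2) * Scos j i s)" using S0 \<kappa>pos Npos by simp
      moreover have "0 \<le> \<kappa> * max b 0" using \<kappa>pos by simp
      ultimately show ?thesis by linarith
    next
      case False
      define x where "x = - y"
      have x: "0 < x" "x \<le> b" using False yb by (auto simp: x_def y_def)
      have sx1: "sin (x/2) \<ge> 0" using x yu E by (intro sin_ge_zero) (auto simp: x_def y_def)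
      have sx2: "sin (x/2) \<le> x/2" using x by (intro sin_x_le_x) auto
      note sx = sx1 sx2
      have "2 * sin (x/2) * Scos j i s \<le> x * real N"
      proof -
        have "2 * sin (x/2) * Scos j i s \<le> x * Scos j i s" using sx S0 by (intro mult_right_mono) auto
        also have "\<dots> \<le> x * real N" using SN x by (intro mult_left_mono) auto
        finally show ?thesis .
      qed
      also have "\<dots> \<le> max b 0 * real N" using x by (intro mult_right_mono) auto
      finally have "\<kappa> / real N * (2 * sin (x/2) * Scos j i s) \<le> \<kappa> / real N * (max b 0 * real N)"
        using \<kappa>pos Npos by (intro mult_left_mono) auto
      also have "\<dots> = \<kappa> * max b 0" using Npos by simp
      finally have "\<kappa> / real N * (2 * sin (x/2) * Scos j i s) \<le> \<kappa> * max b 0" .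
      moreover have "sin (y/2) = - sin (x/2)" by (simp add: x_def)
      ultimately show ?thesis by simp
    qed
    thus "dp j i s \<le> - C" unfolding dp_alt C_def y_def by linarith
  qed
  thus ?thesis by simp
qed

end


context kur begin

lemma part1_sup: "t \<ge> 0 \<Longrightarrow> diam_idx (\<lambda>i. \<Theta> i t) A \<le> l"
  using diam_le_iff[OF finA A_ne] part1a by blast

lemma ev_near: "\<epsilon> > 0 \<Longrightarrow> eventually (\<lambda>t. \<forall>i\<in>A. \<forall>j\<in>A. \<Theta> i t - \<Theta> j t \<le> \<phi> + \<epsilon>) at_top"
proof -
  assume e: "\<epsilon> > 0"
  obtain T where T: "T \<ge> 0" "\<And>t i j. t \<ge> T \<Longrightarrow> i \<in> A \<Longrightarrow> j \<in> A \<Longrightarrow> \<Theta> i t - \<Theta> j t \<le> \<phi> + \<epsilon>"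
    using near[OF e] by blast
  show ?thesis unfolding eventually_at_top_linorder using T by blast
qed

lemma part1_limsup: "Limsup at_top (\<lambda>t. ereal (diam_idx (\<lambda>i. \<Theta> i t) A)) \<le> ereal \<phi>"
  unfolding Limsup_le_iff
proof (intro allI impI)
  fix y :: ereal assume y: "y > ereal \<phi>"
  show "eventually (\<lambda>t. y > ereal (diam_idx (\<lambda>i. \<Theta> i t) A)) at_top"
  proof (cases y)
    case (real y')
    hence y': "y' > \<phi>" using y by simp
    have "eventually (\<lambda>t. \<forall>i\<in>A. \<forall>j\<in>A. \<Theta> i t - \<Theta> j t \<le> \<phi> + (y' - \<phi>)/2) at_top"
      using y' by (intro ev_near) auto
    thus ?thesis
    proof eventually_elim
      case (elim t)
      hence "diam_idx (\<lambda>i. \<Theta> i t) A \<le> \<phi> + (y' - \<phi>)/2" using diam_le_iff[OF finA A_ne] by blast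
      moreover have "\<phi> + (y' - \<phi>)/2 < y'" using y' by argo
      ultimately show ?case using real by simp
    qed
  qed (use y in auto)
qed

lemma p3_gt:
  assumes H: "r < f \<theta>0" and ij: "i \<in> A" "j \<in> A" and gt: "\<nu> i > \<nu> j"
  shows "ereal ((\<nu> i - \<nu> j) / \<kappa>) \<le> Liminf at_top (\<lambda>t. ereal (\<Theta> i t - \<Theta> j t))
       \<and> Liminf at_top (\<lambda>t. ereal (\<Theta> i t - \<Theta> j t)) \<le> Limsup at_top (\<lambda>t. ereal (\<Theta> i t - \<Theta> j t))
       \<and> Limsup at_top (\<lambda>t. ereal (\<Theta> i t - \<Theta> j t)) \<le> ereal (pi / (2 * sqrt 2 * s0) * ((\<nu> i - \<nu> j) / \<kappa>))"
proof (intro conjI)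
  define q where "q = (\<nu> i - \<nu> j) / \<kappa>"
  have q: "q > 0" using gt \<kappa>pos by (simp add: q_def)
  have s0: "s0 > 0" by (rule s0_pos[OF H])
  have pt: "\<phi> < \<theta>0" by (rule phi_lt_th0[OF H])
  show "ereal ((\<nu> i - \<nu> j) / \<kappa>) \<le> Liminf at_top (\<lambda>t. ereal (\<Theta> i t - \<Theta> j t))"
    unfolding le_Liminf_iff
  proof (intro allI impI)
    fix y :: ereal assume y: "y < ereal ((\<nu> i - \<nu> j) / \<kappa>)"
    show "eventually (\<lambda>t. y < ereal (\<Theta> i t - \<Theta> j t)) at_top"
    proof (cases y)
      case (real y')
      hence y': "y' < q" using y by (simp add: q_def)
      define b where "b = (y' + q) / 2"
      have b: "b < q" "y' < b" using y' unfolding b_def by argo+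
      have "eventually (\<lambda>t. \<Theta> j t - \<Theta> i t \<le> - b + (b - y')/2) at_top"
        using b by (intro LB[OF H ij gt]) (auto simp: q_def)
      thus ?thesis
      proof eventually_elim
        case (elim t)
        hence "\<Theta> i t - \<Theta> j t > y'" using b by argo
        thus ?case using real by simp
      qed
    qed (use y in auto)
  qed
  show "Liminf at_top (\<lambda>t. ereal (\<Theta> i t - \<Theta> j t)) \<le> Limsup at_top (\<lambda>t. ereal (\<Theta> i t - \<Theta> j t))"
    by (rule Liminf_le_Limsup) simp
  define K where "K = pi / (2 * sqrt 2 * s0) * q"
  have K: "K > 0" using q s0 by (simp add: K_def)
  have Kq: "2 * sqrt 2 / pi * K * s0 = q" using s0 by (simp add: K_def field_simps)
  show "Limsup at_top (\<lambda>t. ereal (\<Theta> i t - \<Theta> j t)) \<le> ereal (pi / (2 * sqrt 2 * s0) * ((\<nu> i - \<nu> j) / \<kappa>))"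
    unfolding Limsup_le_iff K_def[unfolded q_def, symmetric]
  proof (intro allI impI)
    fix y :: ereal assume y: "y > ereal K"
    show "eventually (\<lambda>t. y > ereal (\<Theta> i t - \<Theta> j t)) at_top"
    proof (cases y)
      case (real y')
      hence y': "y' > K" using y by simp
      show ?thesis
      proof (cases "y' > \<phi>")
        case True
        have "eventually (\<lambda>t. \<forall>i\<in>A. \<forall>j\<in>A. \<Theta> i t - \<Theta> j t \<le> \<phi> + (y' - \<phi>)/2) at_top"
          using True by (intro ev_near) auto
        thus ?thesis
        proof eventually_elim
          case (elim t)
          hence "\<Theta> i t - \<Theta> j t \<le> \<phi> + (y' - \<phi>)/2" using ij by blast
          moreover have "\<phi> + (y' - \<phi>)/2 < y'" using True by argo
          ultimately show ?case using real by simp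
        qed
      next
        case False
        define b where "b = (K + y') / 2"
        have b: "0 < b" "b \<le> \<phi>" "K < b" "b < y'" using K y' False unfolding b_def by argo+
        have jb: "2 * sqrt 2 / pi * (b/2) \<le> sin (b/2)" using b pt th0 by (intro jordan) auto
        have c0: "0 < 2 * sqrt 2 / pi" by simp
        have "2 * sqrt 2 / pi * K < 2 * sqrt 2 / pi * b" using b c0 by (intro mult_strict_left_mono) auto
        hence "2 * sqrt 2 / pi * K * s0 < 2 * sqrt 2 / pi * b * s0" using s0 by (intro mult_strict_right_mono) auto
        also have "2 * sqrt 2 / pi * b * s0 = 2 * (2 * sqrt 2 / pi * (b/2)) * s0" by simp
        also have "\<dots> \<le> 2 * sin (b/2) * s0" using jb s0 by (intro mult_right_mono) auto
        finally have gap: "2 * sin (b/2) * s0 > (\<nu> i - \<nu> j) / \<kappa>" using Kq by (simp add: q_def)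
        have "eventually (\<lambda>t. \<Theta> i t - \<Theta> j t \<le> b + (y' - b)/2) at_top"
          using b by (intro UB[OF H ij _ _ gap]) auto
        thus ?thesis
        proof eventually_elim
          case (elim t)
          hence "\<Theta> i t - \<Theta> j t < y'" using b by argo
          thus ?case using real by simp
        qed
      qed
    qed (use y in auto)
  qed
qed

lemma eq_side:
  assumes H: "r < f \<theta>0" and ij: "i \<in> A" "j \<in> A" and eq: "\<nu> i = \<nu> j" and e: "e > 0"
  shows "eventually (\<lambda>t. \<Theta> i t - \<Theta> j t \<le> e/2) at_top"
proof (cases "\<phi> < e/2")
  case True
  have "eventually (\<lambda>t. \<forall>i\<in>A. \<forall>j\<in>A. \<Theta> i t - \<Theta> j t \<le> \<phi> + (e/2 - \<phi>)) at_top"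
    using True by (intro ev_near) auto
  thus ?thesis by eventually_elim (use ij in auto)
next
  case False
  have s0: "s0 > 0" by (rule s0_pos[OF H])
  have pt: "\<phi> < \<theta>0" by (rule phi_lt_th0[OF H])
  have b: "0 < e/4" "e/4 \<le> \<phi>" using e False by argo+
  have "sin ((e/4)/2) > 0" using b pt th0 by (intro sin_gt_zero) auto
  hence gap: "2 * sin ((e/4)/2) * s0 > (\<nu> i - \<nu> j) / \<kappa>" using s0 eq by simp
  have "eventually (\<lambda>t. \<Theta> i t - \<Theta> j t \<le> e/4 + e/4) at_top"
    using e by (intro UB[OF H ij b gap]) auto
  thus ?thesis by eventually_elim simp
qed

lemma p3_eq:
  assumes H: "r < f \<theta>0" and ij: "i \<in> A" "j \<in> A" and eq: "\<nu> i = \<nu> j"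
  shows "((\<lambda>t. \<Theta> i t - \<Theta> j t) \<longlongrightarrow> 0) at_top"
  unfolding tendsto_iff
proof (intro allI impI)
  fix e :: real assume e: "e > 0"
  have "eventually (\<lambda>t. \<Theta> i t - \<Theta> j t \<le> e/2) at_top" by (rule eq_side[OF H ij eq e])
  moreover have "eventually (\<lambda>t. \<Theta> j t - \<Theta> i t \<le> e/2) at_top" using eq by (intro eq_side[OF H ij(2,1) _ e]) auto
  ultimately show "eventually (\<lambda>t. dist (\<Theta> i t - \<Theta> j t) 0 < e) at_top"
  proof eventually_elim
    case (elim t)
    thus ?case using e by (simp add: dist_real_def abs_less_iff)
  qed
qed

end


theorem theorem3p1:
  fixes N :: nat and \<nu> :: "nat \<Rightarrow> real" and \<kappa> \<gamma> l :: real
    and \<theta> :: "nat \<Rightarrow> real \<Rightarrow> real" and A B :: "nat set" and m :: "nat \<Rightarrow> int"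
  assumes N: "N \<ge> 2"
    and AB: "A \<subseteq> B" and BN: "B \<subseteq> {1..N}"
    and \<gamma>: "1/2 < \<gamma>" "\<gamma> \<le> 1"
    and l: "0 < l" "l < 2 * arccos (1/\<gamma> - 1)"
    and \<kappa>: "\<kappa> > diam_idx \<nu> B / (\<gamma> * sin l - 2 * (1 - \<gamma>) * sin (l / 2))"
    and sol: "kuramoto_solution N \<nu> \<kappa> \<theta>"
    and ens: "gamma_ensemble N \<gamma> A"
    and arc: "diam_idx (\<lambda>i. \<theta> i 0 + 2 * pi * real_of_int (m i)) A \<le> l"
  shows
    "let \<theta>' = (\<lambda>i t. if i \<in> A then \<theta> i t + 2 * pi * real_of_int (m i) else \<theta> i t);
         \<phi>\<^sub>1 = phi1 \<gamma> \<kappa> (diam_idx \<nu> B)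
     in (\<forall>t\<ge>0. diam_idx (\<lambda>i. \<theta>' i t) A \<le> l)
      \<and> Limsup at_top (\<lambda>t. ereal (diam_idx (\<lambda>i. \<theta>' i t) A)) \<le> ereal \<phi>\<^sub>1
      \<and> bdd_above ((\<lambda>t. diam_idx (\<lambda>i. \<theta>' i t) B) ` {0..})
      \<and> (diam_idx \<nu> B / \<kappa> < (2 * \<gamma> - 1) powr (3/2) / sqrt (2 * \<gamma>)
                              * ((2 - \<gamma>) / (sqrt (\<gamma> / 2) + (1 - \<gamma>)))
         \<longrightarrow> (\<forall>i\<in>A. \<forall>j\<in>A.
               (\<nu> i > \<nu> j \<longrightarrow>
                  ereal ((\<nu> i - \<nu> j) / \<kappa>) \<le> Liminf at_top (\<lambda>t. ereal (\<theta>' i t - \<theta>' j t))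
                \<and> Liminf at_top (\<lambda>t. ereal (\<theta>' i t - \<theta>' j t))
                    \<le> Limsup at_top (\<lambda>t. ereal (\<theta>' i t - \<theta>' j t))
                \<and> Limsup at_top (\<lambda>t. ereal (\<theta>' i t - \<theta>' j t))
                    \<le> ereal (pi / (2 * sqrt 2 * (\<gamma> * cos \<phi>\<^sub>1 - (1 - \<gamma>))) * ((\<nu> i - \<nu> j) / \<kappa>)))
             \<and> (\<nu> i = \<nu> j \<longrightarrow> ((\<lambda>t. \<theta>' i t - \<theta>' j t) \<longlongrightarrow> 0) at_top)))"
proof -
  define mm where "mm i = (if i \<in> A then m i else 0)" for i
  define \<Theta> where "\<Theta> i t = \<theta> i t + 2 * pi * real_of_int (mm i)" for i t
  have \<Theta>_eq: "(\<lambda>i t. if i \<in> A then \<theta> i t + 2 * pi * real_of_int (m i) else \<theta> i t) = \<Theta>"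
    by (auto simp: \<Theta>_def mm_def fun_eq_iff)
  have finB: "finite B" using BN finite_subset by blast
  have finA: "finite A" using AB finB finite_subset by blast
  have Npos: "real N > 0" using N by simp
  have cardA: "real (card A) \<ge> \<gamma> * real N"
    using ens Npos unfolding gamma_ensemble_def by (simp add: le_divide_eq)
  have A_ne: "A \<noteq> {}"
  proof
    assume "A = {}"
    hence "\<gamma> * real N \<le> 0" using cardA by simp
    moreover have "\<gamma> * real N > 0" using \<gamma> Npos by simp
    ultimately show False by simp
  qed
  interpret K: kur N \<nu> \<kappa> \<gamma> l \<Theta> A B
  proof
    show "N \<ge> 2" "A \<subseteq> B" "B \<subseteq> {1..N}" "1/2 < \<gamma>" "\<gamma> \<le> 1" "0 < l" "l < 2 * arccos (1/\<gamma> - 1)"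
      using assms by auto
    show "\<kappa> > diam_idx \<nu> B / (\<gamma> * sin l - 2 * (1 - \<gamma>) * sin (l / 2))" by (rule \<kappa>)
    show "real (card A) \<ge> \<gamma> * real N" by (rule cardA)
  next
    fix i t assume i: "i \<in> {1..N}" and t: "(t::real) \<ge> 0"
    have sh: "sin (\<Theta> j t - \<Theta> i t) = sin (\<theta> j t - \<theta> i t)" for j
    proof -
      have "\<Theta> j t - \<Theta> i t = (\<theta> j t - \<theta> i t) + 2 * pi * real_of_int (mm j - mm i)"
        by (simp add: \<Theta>_def algebra_simps)
      thus ?thesis by (simp only: sin_shift_int)
    qed
    have "(\<theta> i has_real_derivative (\<nu> i + \<kappa> / real N * (\<Sum>j=1..N. sin (\<theta> j t - \<theta> i t)))) (at t within {0..})"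
      using sol i t unfolding kuramoto_solution_def by blast
    hence "((\<lambda>t. \<theta> i t + 2 * pi * real_of_int (mm i)) has_real_derivative (\<nu> i + \<kappa> / real N * (\<Sum>j=1..N. sin (\<theta> j t - \<theta> i t))) + 0) (at t within {0..})"
      by (intro DERIV_add DERIV_const)
    thus "((\<Theta> i) has_real_derivative (\<nu> i + \<kappa> / real N * (\<Sum>j=1..N. sin (\<Theta> j t - \<Theta> i t)))) (at t within {0..})"
      unfolding sh by (simp add: \<Theta>_def[abs_def])
  next
    fix i j assume ij: "i \<in> A" "j \<in> A"
    have "\<forall>i\<in>A. \<forall>j\<in>A. (\<theta> i 0 + 2 * pi * real_of_int (m i)) - (\<theta> j 0 + 2 * pi * real_of_int (m j)) \<le> l"
      using arc diam_le_iff[OF finA A_ne, of "\<lambda>i. \<theta> i 0 + 2 * pi * real_of_int (m i)" l] by simp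
    thus "\<Theta> i 0 - \<Theta> j 0 \<le> l" using ij by (auto simp: \<Theta>_def mm_def)
  qed
  have phi: "phi1 \<gamma> \<kappa> (diam_idx \<nu> B) = K.\<phi>" by (simp add: K.\<phi>_def K.d_def)
  have s0: "\<gamma> * cos K.\<phi> - (1 - \<gamma>) = K.s0" by (simp add: K.s0_def)
  have H: "diam_idx \<nu> B / \<kappa> < (2 * \<gamma> - 1) powr (3/2) / sqrt (2 * \<gamma>)
                              * ((2 - \<gamma>) / (sqrt (\<gamma> / 2) + (1 - \<gamma>))) \<Longrightarrow> K.r < K.f K.\<theta>0"
    by (simp add: K.r_def K.d_def K.f_def K.\<theta>0_def K.c_def f_theta0[OF \<gamma>])
  show ?thesis
    unfolding Let_def \<Theta>_eq phi s0
    using K.part1_sup K.part1_limsup K.part2 K.p3_gt[OF H] K.p3_eq[OF H] by blast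
qed


end
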